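(* Let $F$ be a totally real field, $\mathfrak{g}_0$ a nonzero integral ideal, $\mathfrak{p}$ a prime ideal and $\mathfrak{g}_1=\mathfrak{p}\mathfrak{g}_0$. Let $\mathscr{T}'[\mathfrak{g}_1]=\{\zeta\in\mathscr{T}[\mathfrak{g}_1]:\zeta^{\mathfrak{p}}\in\mathscr{T}_0[\mathfrak{g}_0]\}$ be the inverse image of $\mathscr{T}_0[\mathfrak{g}_0]$ under $(-)^{\mathfrak{p}}\colon\mathscr{T}[\mathfrak{g}_1]\to\mathscr{T}[\mathfrak{g}_0]$. Then $\mathscr{T}'[\mathfrak{g}_1]=\mathscr{T}_0[\mathfrak{g}_1]$ if $\mathfrak{p}\mid\mathfrak{g}_0$, and $\mathscr{T}'[\mathfrak{g}_1]=\mathscr{T}_0[\mathfrak{g}_1]\amalg\mathscr{T}_0[\mathfrak{g}_0]$ if $\mathfrak{p}\nmid\mathfrak{g}_0$.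
   Context: For a nonzero fractional ideal $\mathfrak{a}$ and nonzero integral ideal $\mathfrak{g}$, $\mathbb{T}^{\mathfrak{a}}[\mathfrak{g}](\mathbb{C})$ is the set of characters $\mathfrak{a}\to\mathbb{C}^\times$ trivial on $\mathfrak{g}\mathfrak{a}$, and $\mathbb{T}^{\mathfrak{a}}_0[\mathfrak{g}](\mathbb{C})$ the primitive ones (not trivial on $\mathfrak{g}'\mathfrak{a}$ for any integral $\mathfrak{g}'\supsetneq\mathfrak{g}$). The totally positive elements $F^\times_+$ act on $\coprod_{\mathfrak{a}}\operatorname{Hom}(\mathfrak{a},\mathbb{C}^\times)$ by identifying $\xi'\in\operatorname{Hom}(x\mathfrak{a},\mathbb{C}^\times)$ with $\alpha\mapsto\xi'(x\alpha)$ in $\operatorname{Hom}(\mathfrak{a},\mathbb{C}^\times)$; $\mathscr{T}[\mathfrak{g}]$ and $\mathscr{T}_0[\mathfrak{g}]$ are the orbit sets of $\coprod_{\mathfrak{a}}\mathbb{T}^{\mathfrak{a}}[\mathfrak{g}](\mathbb{C})$ and $\coprod_{\mathfrak{a}}\mathbb{T}^{\mathfrak{a}}_0[\mathfrak{g}](\mathbb{C})$. For $\zeta\in\operatorname{Hom}(\mathfrak{a},\mathbb{C}^\times)$, $\zeta^{\mathfrak{p}}$ is its restriction to $\mathfrak{p}\mathfrak{a}$; this induces maps $\mathscr{T}[\mathfrak{g}_1]\to\mathscr{T}[\mathfrak{g}_0]$. Note $\mathscr{T}[\mathfrak{g}_0]\subset\mathscr{T}[\mathfrak{g}_1]$ since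 characters trivial on $\mathfrak{g}_0\mathfrak{a}$ are trivial on $\mathfrak{g}_1\mathfrak{a}$. *)

theory Defs
  imports "HOL-Computational_Algebra.Polynomial" Complex_Main
begin

definition subfield_C :: "complex set \<Rightarrow> bool" where
  "subfield_C F \<longleftrightarrow> 0 \<in> F \<and> 1 \<in> F \<and>
     (\<forall>x\<in>F. \<forall>y\<in>F. x + y \<in> F \<and> x * y \<in> F) \<and>
     (\<forall>x\<in>F. - x \<in> F \<and> inverse x \<in> F)"

definition number_field :: "complex set \<Rightarrow> bool" where
  "number_field F \<longleftrightarrow> subfield_C F \<and>
     (\<exists>B. finite B \<and> B \<subseteq> F \<and>
        (\<forall>x\<in>F. \<exists>c :: complex \<Rightarrow> rat. x = (\<Sum>b\<in>B. of_rat (c b) * b)))"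

definition embedding :: "complex set \<Rightarrow> (complex \<Rightarrow> complex) \<Rightarrow> bool" where
  "embedding F \<sigma> \<longleftrightarrow> \<sigma> 1 = 1 \<and>
     (\<forall>x\<in>F. \<forall>y\<in>F. \<sigma> (x + y) = \<sigma> x + \<sigma> y \<and> \<sigma> (x * y) = \<sigma> x * \<sigma> y)"

definition totally_real_field :: "complex set \<Rightarrow> bool" where
  "totally_real_field F \<longleftrightarrow> number_field F \<and>
     (\<forall>\<sigma>. embedding F \<sigma> \<longrightarrow> (\<forall>x\<in>F. \<sigma> x \<in> \<real>))"

definition totally_positive :: "complex set \<Rightarrow> complex \<Rightarrow> bool" where
  "totally_positive F x \<longleftrightarrow> x \<in> F \<and> x \<noteq> 0 \<and>
     (\<forall>\<sigma>. embedding F \<sigma> \<longrightarrow> \<sigma> x \<in> \<real> \<and> Re (\<sigma> x) > 0)"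

definition ring_of_integers :: "complex set \<Rightarrow> complex set" where
  "ring_of_integers F = {x \<in> F. algebraic_int x}"

text \<open>Nonzero fractional ideals of F: nonzero finitely generated O_F-submodules of F,
  equivalently nonzero O_F-submodules a of F with d a contained in O_F for some nonzero d in O_F.\<close>
definition fractional_ideal :: "complex set \<Rightarrow> complex set \<Rightarrow> bool" where
  "fractional_ideal F a \<longleftrightarrow> a \<subseteq> F \<and> 0 \<in> a \<and> a \<noteq> {0} \<and>
     (\<forall>x\<in>a. \<forall>y\<in>a. x + y \<in> a) \<and>
     (\<forall>r\<in>ring_of_integers F. \<forall>x\<in>a. r * x \<in> a) \<and>
     (\<exists>d\<in>ring_of_integers F. d \<noteq> 0 \<and> (\<forall>x\<in>a. d * x \<in> ring_of_integers F))"

definition integral_ideal :: "complex set \<Rightarrow> complex set \<Rightarrow> bool" where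
  "integral_ideal F g \<longleftrightarrow> fractional_ideal F g \<and> g \<subseteq> ring_of_integers F"

definition ideal_mult :: "complex set \<Rightarrow> complex set \<Rightarrow> complex set" where
  "ideal_mult a b = {sum_list (map (\<lambda>(x, y). x * y) xs) | xs. set xs \<subseteq> a \<times> b}"

definition prime_ideal :: "complex set \<Rightarrow> complex set \<Rightarrow> bool" where
  "prime_ideal F p \<longleftrightarrow> integral_ideal F p \<and> p \<noteq> ring_of_integers F \<and>
     (\<forall>x\<in>ring_of_integers F. \<forall>y\<in>ring_of_integers F. x * y \<in> p \<longrightarrow> x \<in> p \<or> y \<in> p)"

definition ideal_dvd :: "complex set \<Rightarrow> complex set \<Rightarrow> complex set \<Rightarrow> bool" where
  "ideal_dvd F p g \<longleftrightarrow> (\<exists>c. integral_ideal F c \<and> g = ideal_mult p c)"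

text \<open>A character of the fractional ideal a is a homomorphism (a,+) to the multiplicative
  group of C; represented extensionally (value 1 outside a).\<close>
definition character :: "complex set \<Rightarrow> (complex \<Rightarrow> complex) \<Rightarrow> bool" where
  "character a \<xi> \<longleftrightarrow> (\<forall>x\<in>a. \<xi> x \<noteq> 0) \<and>
     (\<forall>x\<in>a. \<forall>y\<in>a. \<xi> (x + y) = \<xi> x * \<xi> y) \<and> (\<forall>x. x \<notin> a \<longrightarrow> \<xi> x = 1)"

text \<open>The coproduct over all fractional ideals a of Hom(a, C^x), as pairs (a, xi).\<close>
definition all_chars :: "complex set \<Rightarrow> (complex set \<times> (complex \<Rightarrow> complex)) set" where
  "all_chars F = {(a, \<xi>). fractional_ideal F a \<and> character a \<xi>}"

text \<open>Characters of a trivial on g a, i.e. T^a[g](C), as a subset of the coproduct.\<close>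
definition Tchars :: "complex set \<Rightarrow> complex set \<Rightarrow> (complex set \<times> (complex \<Rightarrow> complex)) set" where
  "Tchars F g = {(a, \<xi>) \<in> all_chars F. \<forall>x\<in>ideal_mult g a. \<xi> x = 1}"

definition T0chars :: "complex set \<Rightarrow> complex set \<Rightarrow> (complex set \<times> (complex \<Rightarrow> complex)) set" where
  "T0chars F g = {(a, \<xi>) \<in> Tchars F g. \<forall>g'. integral_ideal F g' \<and> g \<subset> g' \<longrightarrow>
                     \<not> (\<forall>x\<in>ideal_mult g' a. \<xi> x = 1)}"

text \<open>Action of totally positive elements: xi' in Hom(x a, C^x) is identified with
  alpha |-> xi'(x alpha) in Hom(a, C^x).\<close>
definition orbit_rel :: "complex set \<Rightarrow> (complex set \<times> (complex \<Rightarrow> complex)) \<Rightarrow>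
     (complex set \<times> (complex \<Rightarrow> complex)) \<Rightarrow> bool" where
  "orbit_rel F z w \<longleftrightarrow> z \<in> all_chars F \<and> w \<in> all_chars F \<and>
     (\<exists>x. totally_positive F x \<and> fst w = (\<lambda>\<alpha>. x * \<alpha>) ` fst z \<and>
          (\<forall>\<alpha>\<in>fst z. snd w (x * \<alpha>) = snd z \<alpha>))"

definition orbit :: "complex set \<Rightarrow> (complex set \<times> (complex \<Rightarrow> complex)) \<Rightarrow>
     (complex set \<times> (complex \<Rightarrow> complex)) set" where
  "orbit F z = {w. orbit_rel F z w}"

definition scrT :: "complex set \<Rightarrow> complex set \<Rightarrow> (complex set \<times> (complex \<Rightarrow> complex)) set set" where
  "scrT F g = orbit F ` Tchars F g"

definition scrT0 :: "complex set \<Rightarrow> complex set \<Rightarrow> (complex set \<times> (complex \<Rightarrow> complex)) set set" where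
  "scrT0 F g = orbit F ` T0chars F g"

definition restr :: "complex set \<Rightarrow> (complex set \<times> (complex \<Rightarrow> complex)) \<Rightarrow>
     (complex set \<times> (complex \<Rightarrow> complex))" where
  "restr p z = (ideal_mult p (fst z), (\<lambda>x. if x \<in> ideal_mult p (fst z) then snd z x else 1))"

definition restr_orbit :: "complex set \<Rightarrow> complex set \<Rightarrow> (complex set \<times> (complex \<Rightarrow> complex)) set \<Rightarrow>
     (complex set \<times> (complex \<Rightarrow> complex)) set" where
  "restr_orbit F p Ob = orbit F (restr p (SOME z. z \<in> Ob))"

definition scrT' :: "complex set \<Rightarrow> complex set \<Rightarrow> complex set \<Rightarrow> (complex set \<times> (complex \<Rightarrow> complex)) set set" where
  "scrT' F p g0 = {Ob \<in> scrT F (ideal_mult p g0). restr_orbit F p Ob \<in> scrT0 F g0}"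

end

theory Submission
  imports Defs Jordan_Normal_Form.Char_Poly
begin

inductive_set zspan :: "complex set \<Rightarrow> complex set" for S where
  zspan_zero: "0 \<in> zspan S"
| zspan_base: "x \<in> S \<Longrightarrow> x \<in> zspan S"
| zspan_add: "x \<in> zspan S \<Longrightarrow> y \<in> zspan S \<Longrightarrow> x + y \<in> zspan S"
| zspan_neg: "x \<in> zspan S \<Longrightarrow> - x \<in> zspan S"

lemma zspan_diff: "x \<in> zspan S \<Longrightarrow> y \<in> zspan S \<Longrightarrow> x - y \<in> zspan S"
  using zspan_add[of x S "-y"] zspan_neg[of y S] by simp

lemma zspan_of_nat_mult: "x \<in> zspan S \<Longrightarrow> of_nat n * x \<in> zspan S"
  by (induction n) (auto simp: distrib_right intro: zspan.intros)

lemma zspan_of_int_mult: "x \<in> zspan S \<Longrightarrow> of_int k * x \<in> zspan S"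
proof (cases "k \<ge> 0")
  case True
  assume x: "x \<in> zspan S"
  from True obtain n where "k = int n" using nonneg_int_cases by blast
  then show ?thesis using zspan_of_nat_mult[OF x, of n] by simp
next
  case False
  assume x: "x \<in> zspan S"
  have "complex_of_int k = - of_nat (nat (-k))" using False by simp
  then show ?thesis using zspan_neg[OF zspan_of_nat_mult[OF x, of "nat (-k)"]] by simp
qed

lemma zspan_sum: "finite I \<Longrightarrow> (\<And>i. i \<in> I \<Longrightarrow> f i \<in> zspan S) \<Longrightarrow> sum f I \<in> zspan S"
  by (induction I rule: finite_induct) (auto intro: zspan.intros)

lemma zspan_subset: assumes "S \<subseteq> zspan T" "x \<in> zspan S" shows "x \<in> zspan T"
  using assms(2) by (induction x rule: zspan.induct) (use assms(1) in \<open>auto intro: zspan.intros\<close>)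

lemma zspan_mono: "S \<subseteq> T \<Longrightarrow> x \<in> zspan S \<Longrightarrow> x \<in> zspan T"
  by (rule zspan_subset) (auto intro: zspan.intros)

lemma zspan_mult_closed:
  assumes "\<And>s. s \<in> S \<Longrightarrow> a * s \<in> zspan T" "x \<in> zspan S"
  shows "a * x \<in> zspan T"
  using assms(2) by (induction x rule: zspan.induct) (auto simp: distrib_left intro: zspan.intros assms(1))

lemma zspan_list_repr:
  assumes "x \<in> zspan (set vs)"
  shows "\<exists>c::nat \<Rightarrow> int. x = (\<Sum>j<length vs. of_int (c j) * vs ! j)"
  using assms
proof (induction x rule: zspan.induct)
  case zspan_zero
  then show ?case by (intro exI[of _ "\<lambda>_. 0"]) simp
next
  case (zspan_base x)
  then obtain i where i: "i < length vs" "vs ! i = x" by (auto simp: in_set_conv_nth)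
  show ?case
    by (intro exI[of _ "\<lambda>j. if j = i then 1 else 0"]) (simp add: i if_distrib[of "\<lambda>z. of_int z * _"] sum.delta cong: if_cong)
next
  case (zspan_add x y)
  then obtain c d where "x = (\<Sum>j<length vs. of_int (c j) * vs ! j)" "y = (\<Sum>j<length vs. of_int (d j) * vs ! j)" by blast
  then show ?case by (intro exI[of _ "\<lambda>j. c j + d j"]) (simp add: sum.distrib distrib_right)
next
  case (zspan_neg x)
  then obtain c where "x = (\<Sum>j<length vs. of_int (c j) * vs ! j)" by blast
  then show ?case by (intro exI[of _ "\<lambda>j. - c j"]) (simp add: sum_negf)
qed

lemma algebraic_int_crit:
  assumes closed: "\<And>v. v \<in> set vs \<Longrightarrow> y * v \<in> zspan (set vs)"
    and nz: "\<exists>v\<in>set vs. v \<noteq> 0"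
  shows "algebraic_int y"
proof -
  define n where "n = length vs"
  have "\<forall>i. \<exists>c::nat \<Rightarrow> int. i < n \<longrightarrow> y * vs ! i = (\<Sum>j<n. of_int (c j) * vs ! j)"
    using closed zspan_list_repr unfolding n_def by (metis nth_mem)
  from choice[OF this] obtain c where c0: "\<forall>i. i < n \<longrightarrow> y * vs ! i = (\<Sum>j<n. of_int (c i j) * vs ! j)"
    by blast
  have c: "y * vs ! i = (\<Sum>j<n. of_int (c i j) * vs ! j)" if "i < n" for i
    using c0 that by blast
  define C :: "int mat" where "C = mat n n (\<lambda>(i,j). c i j)"
  define Cc :: "complex mat" where "Cc = map_mat of_int C"
  define v :: "complex vec" where "v = vec n (\<lambda>j. vs ! j)"
  have C: "C \<in> carrier_mat n n" by (simp add: C_def)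
  have Cc: "Cc \<in> carrier_mat n n" by (simp add: Cc_def C_def)
  have v: "v \<in> carrier_vec n" by (simp add: v_def)
  have vnz: "v \<noteq> 0\<^sub>v n"
  proof
    assume "v = 0\<^sub>v n"
    then have "\<And>j. j < n \<Longrightarrow> vs ! j = 0"
      unfolding v_def by (metis index_vec index_zero_vec(1))
    moreover obtain w where "w \<in> set vs" "w \<noteq> 0" using nz by blast
    ultimately show False unfolding in_set_conv_nth n_def by blast
  qed
  have "Cc *\<^sub>v v = y \<cdot>\<^sub>v v"
  proof (rule eq_vecI)
    fix i assume i: "i < dim_vec (y \<cdot>\<^sub>v v)"
    then have i': "i < n" by (simp add: v_def)
    have "(Cc *\<^sub>v v) $ i = (\<Sum>j<n. of_int (c i j) * vs ! j)"
      using i' by (simp add: Cc_def C_def v_def mult_mat_vec_def scalar_prod_def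
                    atLeast0LessThan)
    also have "\<dots> = y * vs ! i" using c[OF i'] by simp
    finally show "(Cc *\<^sub>v v) $ i = (y \<cdot>\<^sub>v v) $ i" using i' by (simp add: v_def)
  qed (simp add: Cc_def C_def v_def)
  moreover have "dim_row Cc = n" using Cc by simp
  ultimately have "eigenvector Cc v y" using v vnz unfolding eigenvector_def by simp
  then have "eigenvalue Cc y" unfolding eigenvalue_def by blast
  then have root: "poly (char_poly Cc) y = 0" using eigenvalue_root_char_poly[OF Cc] by simp
  have "char_poly Cc = map_poly of_int (char_poly C)"
    unfolding Cc_def by (rule of_int_hom.char_poly_hom[OF C])
  moreover have "lead_coeff (char_poly C) = 1"
    using degree_monic_char_poly[OF C] by simp
  ultimately have "poly (map_poly of_int (char_poly C)) y = 0 \<and> lead_coeff (char_poly C) = 1"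
    using root by simp
  then show ?thesis
    unfolding algebraic_int_altdef_ipoly by blast
qed

lemma algebraic_int_power_repr:
  fixes a :: complex
  assumes "algebraic_int a"
  shows "\<exists>d>0. \<exists>c::nat \<Rightarrow> int. a ^ d = (\<Sum>i<d. of_int (c i) * a ^ i)"
proof -
  obtain p where p: "poly (map_poly of_int p) a = 0" "lead_coeff p = 1"
    using assms unfolding algebraic_int_altdef_ipoly by blast
  define d where "d = degree p"
  have pa: "poly (map_poly of_int p) a = (\<Sum>i\<le>d. of_int (coeff p i) * a ^ i)"
    unfolding poly_altdef d_def degree_map_poly[of of_int p, simplified] 
    by (simp add: coeff_map_poly)
  have "d > 0"
  proof (rule ccontr)
    assume "\<not> d > 0"
    then have "d = 0" by simp
    then have "poly (map_poly of_int p) a = of_int (coeff p 0)" unfolding pa by simp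
    also have "coeff p 0 = 1" using p(2) \<open>d = 0\<close> unfolding d_def by simp
    finally show False using p(1) by simp
  qed
  have "0 = (\<Sum>i\<le>d. of_int (coeff p i) * a ^ i)"
    using p(1) pa by simp
  also have "\<dots> = (\<Sum>i<d. of_int (coeff p i) * a ^ i) + of_int (coeff p d) * a ^ d"
    unfolding lessThan_Suc_atMost[symmetric] by (rule sum.lessThan_Suc)
  also have "coeff p d = 1" using p(2) unfolding d_def by simp
  finally have "a ^ d = - (\<Sum>i<d. of_int (coeff p i) * a ^ i)"
    by (simp add: eq_neg_iff_add_eq_0 add.commute)
  also have "\<dots> = (\<Sum>i<d. of_int (- coeff p i) * a ^ i)"
    by (simp add: sum_negf)
  finally have "a ^ d = (\<Sum>i<d. of_int (- coeff p i) * a ^ i)" .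
  then show ?thesis using \<open>d > 0\<close> by (intro exI[of _ d] conjI exI[of _ "\<lambda>i. - coeff p i"])
qed

lemma zspan_mult_right:
  assumes "\<And>s. s \<in> S \<Longrightarrow> s * a \<in> zspan T" "x \<in> zspan S"
  shows "x * a \<in> zspan T"
  using zspan_mult_closed[of S a T x] assms by (simp add: mult.commute)

lemma finite_gen_set:
  assumes "finite A" "\<And>a. a \<in> A \<Longrightarrow> algebraic_int a"
  shows "\<exists>T. finite T \<and> 1 \<in> T \<and> (\<forall>a\<in>A. \<forall>t\<in>T. a * t \<in> zspan T)"
  using assms
proof (induction A rule: finite_induct)
  case empty
  then show ?case by (intro exI[of _ "{1}"]) auto
next
  case (insert a A)
  then obtain T where T: "finite T" "1 \<in> T" "\<And>b t. b \<in> A \<Longrightarrow> t \<in> T \<Longrightarrow> b * t \<in> zspan T"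
    by blast
  obtain d c where d: "d > 0" "a ^ d = (\<Sum>i<d. of_int (c i) * a ^ i)"
    using algebraic_int_power_repr[of a] insert.prems by blast
  define T' where "T' = (\<lambda>(t, i). t * a ^ i) ` (T \<times> {..<d})"
  have T'I: "t * a ^ i \<in> T'" if "t \<in> T" "i < d" for t i
    using that unfolding T'_def by force
  have fin: "finite T'" using T(1) unfolding T'_def by simp
  have one: "1 \<in> T'" using T'I[OF T(2) d(1)] by simp
  have shift: "x * a ^ i \<in> zspan T'" if "x \<in> zspan T" "i < d" for x i
    by (rule zspan_mult_right[OF _ that(1)]) (use T'I that in \<open>auto intro: zspan_base\<close>)
  have "b * t' \<in> zspan T'" if b: "b \<in> insert a A" and t': "t' \<in> T'" for b t'
  proof -
    obtain t i where ti: "t \<in> T" "i < d" "t' = t * a ^ i" using t' unfolding T'_def by auto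
    show ?thesis
    proof (cases "b = a")
      case True
      show ?thesis
      proof (cases "Suc i < d")
        case True
        then show ?thesis using T'I[OF ti(1) True] \<open>b = a\<close> ti(3)
          by (auto simp: mult_ac intro: zspan_base)
      next
        case False
        then have "Suc i = d" using ti(2) by simp
        then have "b * t' = t * a ^ d" using \<open>b = a\<close> ti(3) by (auto simp: mult_ac)
        also have "\<dots> = (\<Sum>k<d. of_int (c k) * (t * a ^ k))"
          by (simp add: d(2) sum_distrib_left mult_ac)
        also have "\<dots> \<in> zspan T'"
          by (intro zspan_sum zspan_of_int_mult zspan_base T'I ti(1)) auto
        finally show ?thesis .
      qed
    next
      case False
      then have "b \<in> A" using b by simp
      have "b * t' = (b * t) * a ^ i" using ti(3) by (simp add: mult_ac)
      also have "\<dots> \<in> zspan T'" using shift[OF T(3)[OF \<open>b \<in> A\<close> ti(1)] ti(2)] .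
      finally show ?thesis .
    qed
  qed
  then show ?case using fin one by blast
qed

lemma algebraic_int_crit_set:
  fixes y :: complex
  assumes "finite T" "\<And>v. v \<in> T \<Longrightarrow> y * v \<in> zspan T" "\<exists>v\<in>T. v \<noteq> 0"
  shows "algebraic_int y"
proof -
  obtain vs where "set vs = T" using finite_list[OF assms(1)] by blast
  then show ?thesis using algebraic_int_crit[of vs y] assms by blast
qed

lemma algebraic_int_plus:
  fixes x y :: complex
  assumes "algebraic_int x" "algebraic_int y"
  shows "algebraic_int (x + y)"
proof -
  obtain T where T: "finite T" "1 \<in> T" "\<And>a t. a \<in> {x, y} \<Longrightarrow> t \<in> T \<Longrightarrow> a * t \<in> zspan T"
  proof -
    have "finite {x, y}" "\<And>a. a \<in> {x, y} \<Longrightarrow> algebraic_int a" using assms by auto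
    from finite_gen_set[OF this] show ?thesis using that by blast
  qed
  show ?thesis
  proof (rule algebraic_int_crit_set[OF T(1)])
    fix v assume "v \<in> T"
    then show "(x + y) * v \<in> zspan T"
      using T(3)[of x v] T(3)[of y v] by (auto simp: distrib_right intro: zspan_add)
  next
    show "\<exists>v\<in>T. v \<noteq> 0" by (rule bexI[of _ 1]) (simp, rule T(2))
  qed
qed

lemma algebraic_int_times:
  fixes x y :: complex
  assumes "algebraic_int x" "algebraic_int y"
  shows "algebraic_int (x * y)"
proof -
  obtain T where T: "finite T" "1 \<in> T" "\<And>a t. a \<in> {x, y} \<Longrightarrow> t \<in> T \<Longrightarrow> a * t \<in> zspan T"
  proof -
    have "finite {x, y}" "\<And>a. a \<in> {x, y} \<Longrightarrow> algebraic_int a" using assms by auto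
    from finite_gen_set[OF this] show ?thesis using that by blast
  qed
  show ?thesis
  proof (rule algebraic_int_crit_set[OF T(1)])
    fix v assume "v \<in> T"
    then have "y * v \<in> zspan T" using T(3) by auto
    then have "x * (y * v) \<in> zspan T"
      by (rule zspan_mult_closed[rotated]) (use T(3) in auto)
    then show "(x * y) * v \<in> zspan T" by (simp add: mult.assoc)
  next
    show "\<exists>v\<in>T. v \<noteq> 0" by (rule bexI[of _ 1]) (simp, rule T(2))
  qed
qed

lemma algebraic_int_diff:
  fixes x y :: complex shows "algebraic_int x \<Longrightarrow> algebraic_int y \<Longrightarrow> algebraic_int (x - y)"
  unfolding diff_conv_add_uminus by (intro algebraic_int_plus) auto

lemma algebraic_int_sum:
  fixes f :: "'b \<Rightarrow> complex" shows "(\<And>i. i \<in> I \<Longrightarrow> algebraic_int (f i)) \<Longrightarrow> algebraic_int (sum f I)"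
  by (induction I rule: infinite_finite_induct) (auto intro: algebraic_int_plus)

lemma algebraic_int_power:
  fixes x :: complex shows "algebraic_int x \<Longrightarrow> algebraic_int (x ^ n)"
  by (induction n) (auto intro: algebraic_int_times)

lemma integral_crit2:
  fixes y :: complex
  assumes W: "finite W" "\<exists>w\<in>W. w \<noteq> 0"
    and rel: "\<And>w. w \<in> W \<Longrightarrow> \<exists>f. (\<forall>w'\<in>W. algebraic_int (f w')) \<and> y * w = (\<Sum>w'\<in>W. f w' * w')"
  shows "algebraic_int y"
proof -
  from rel have "\<forall>w. \<exists>f. w \<in> W \<longrightarrow> (\<forall>w'\<in>W. algebraic_int (f w')) \<and> y * w = (\<Sum>w'\<in>W. f w' * w')"
    by blast
  from choice[OF this] obtain f where f:
    "\<forall>w. w \<in> W \<longrightarrow> (\<forall>w'\<in>W. algebraic_int (f w w')) \<and> y * w = (\<Sum>w'\<in>W. f w w' * w')"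
    by blast
  define A where "A = (\<lambda>(w, w'). f w w') ` (W \<times> W)"
  have "finite A" using W(1) by (simp add: A_def)
  moreover have "\<And>a. a \<in> A \<Longrightarrow> algebraic_int a" using f by (auto simp: A_def)
  ultimately obtain T where T: "finite T" "1 \<in> T" "\<And>a t. a \<in> A \<Longrightarrow> t \<in> T \<Longrightarrow> a * t \<in> zspan T"
    using finite_gen_set[of A] by blast
  define M where "M = (\<lambda>(t, w). t * w) ` (T \<times> W)"
  have MI: "t * w \<in> M" if "t \<in> T" "w \<in> W" for t w using that unfolding M_def by force
  show ?thesis
  proof (rule algebraic_int_crit_set[of M])
    show "finite M" using T(1) W(1) by (simp add: M_def)
    show "\<exists>v\<in>M. v \<noteq> 0" using W(2) MI[OF T(2)] by force
    fix v assume "v \<in> M"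
    then obtain t w where tw: "t \<in> T" "w \<in> W" "v = t * w" unfolding M_def by auto
    have "y * v = t * (y * w)" using tw(3) by (simp add: mult_ac)
    also have "\<dots> = (\<Sum>w'\<in>W. (f w w' * t) * w')" using f tw(2) by (simp add: sum_distrib_left mult_ac)
    also have "\<dots> \<in> zspan M"
    proof (intro zspan_sum W(1))
      fix w' assume w': "w' \<in> W"
      have "f w w' \<in> A" using tw(2) w' by (auto simp: A_def)
      then have "f w w' * t \<in> zspan T" using T(3) tw(1) by blast
      then show "(f w w' * t) * w' \<in> zspan M"
        by (rule zspan_mult_right[rotated]) (use MI w' in \<open>auto intro: zspan_base\<close>)
    qed
    finally show "y * v \<in> zspan M" .
  qed
qed

section \<open>Products of sets (ideal_mult)\<close>

lemma im_induct[consumes 1, case_names zero prod add]: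
  assumes "x \<in> ideal_mult A B"
    and "P 0"
    and "\<And>a b. a \<in> A \<Longrightarrow> b \<in> B \<Longrightarrow> P (a * b)"
    and "\<And>x y. P x \<Longrightarrow> P y \<Longrightarrow> P (x + y)"
  shows "P x"
proof -
  obtain xs where xs: "x = sum_list (map (\<lambda>(x, y). x * y) xs)" "set xs \<subseteq> A \<times> B"
    using assms(1) unfolding ideal_mult_def by blast
  have "P (sum_list (map (\<lambda>(x, y). x * y) xs))" using xs(2)
  proof (induction xs)
    case Nil then show ?case using assms(2) by simp
  next
    case (Cons p xs)
    obtain a b where p: "p = (a, b)" by (cases p)
    have "a \<in> A" "b \<in> B" using Cons.prems p by auto
    then have "P (a * b)" by (rule assms(3))
    moreover have "P (sum_list (map (\<lambda>(x, y). x * y) xs))" using Cons by simp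
    ultimately show ?case using assms(4) p by simp
  qed
  then show ?thesis using xs(1) by simp
qed

lemma im_0[simp, intro]: "0 \<in> ideal_mult A B"
  unfolding ideal_mult_def by (rule CollectI, rule exI[of _ "[]"]) simp

lemma im_prod[intro]: "a \<in> A \<Longrightarrow> b \<in> B \<Longrightarrow> a * b \<in> ideal_mult A B"
  unfolding ideal_mult_def by (rule CollectI, rule exI[of _ "[(a, b)]"]) simp

lemma im_add[intro]: "x \<in> ideal_mult A B \<Longrightarrow> y \<in> ideal_mult A B \<Longrightarrow> x + y \<in> ideal_mult A B"
proof -
  assume "x \<in> ideal_mult A B" "y \<in> ideal_mult A B"
  then obtain xs ys where "x = sum_list (map (\<lambda>(x, y). x * y) xs)" "set xs \<subseteq> A \<times> B"
    "y = sum_list (map (\<lambda>(x, y). x * y) ys)" "set ys \<subseteq> A \<times> B"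
    unfolding ideal_mult_def by blast
  then show ?thesis unfolding ideal_mult_def by (intro CollectI exI[of _ "xs @ ys"]) auto
qed

lemma im_sum: "(\<And>i. i \<in> I \<Longrightarrow> f i \<in> ideal_mult A B) \<Longrightarrow> sum f I \<in> ideal_mult A B"
  by (induction I rule: infinite_finite_induct) auto

lemma im_subset:
  assumes "0 \<in> C" "\<And>a b. a \<in> A \<Longrightarrow> b \<in> B \<Longrightarrow> a * b \<in> C" "\<And>x y. x \<in> C \<Longrightarrow> y \<in> C \<Longrightarrow> x + y \<in> C"
  shows "ideal_mult A B \<subseteq> C"
proof
  fix x assume "x \<in> ideal_mult A B"
  then show "x \<in> C" by (induction rule: im_induct) (use assms in auto)
qed

lemma im_comm: "ideal_mult A B = ideal_mult B A"
proof -
  have *: "ideal_mult A B \<subseteq> ideal_mult B A" for A B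
  proof (rule im_subset)
    fix a b assume "a \<in> A" "b \<in> B"
    then have "b * a \<in> ideal_mult B A" by (intro im_prod)
    then show "a * b \<in> ideal_mult B A" by (simp add: mult.commute)
  qed auto
  show ?thesis using *[of A B] *[of B A] by blast
qed

lemma im_mono: "A \<subseteq> A' \<Longrightarrow> B \<subseteq> B' \<Longrightarrow> ideal_mult A B \<subseteq> ideal_mult A' B'"
  by (rule im_subset) auto

lemma im_mult_right:
  assumes "x \<in> ideal_mult A B" "c \<in> C"
  shows "x * c \<in> ideal_mult A (ideal_mult B C)"
  using assms(1) by (induction rule: im_induct) (auto simp: distrib_right mult.assoc intro: assms(2))

lemma im_assoc: "ideal_mult (ideal_mult A B) C = ideal_mult A (ideal_mult B C)"
proof
  show "ideal_mult (ideal_mult A B) C \<subseteq> ideal_mult A (ideal_mult B C)"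
    by (rule im_subset) (auto intro: im_mult_right)
next
  have "ideal_mult A (ideal_mult B C) = ideal_mult (ideal_mult C B) A"
    by (simp add: im_comm)
  also have "\<dots> \<subseteq> ideal_mult C (ideal_mult B A)"
    by (rule im_subset) (auto intro: im_mult_right)
  also have "\<dots> = ideal_mult (ideal_mult A B) C"
    by (simp add: im_comm)
  finally show "ideal_mult A (ideal_mult B C) \<subseteq> ideal_mult (ideal_mult A B) C" .
qed

lemma im_scal_left:
  assumes "x \<in> ideal_mult A B" "\<And>a. a \<in> A \<Longrightarrow> r * a \<in> A"
  shows "r * x \<in> ideal_mult A B"
  using assms(1) by (induction rule: im_induct) (auto simp: distrib_left mult.assoc[symmetric] intro: assms(2))

lemma im_scal_right:
  assumes "x \<in> ideal_mult A B" "\<And>b. b \<in> B \<Longrightarrow> r * b \<in> B"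
  shows "r * x \<in> ideal_mult A B"
  using im_scal_left[of x B A r] assms by (simp add: im_comm)

lemma im_nonzero:
  fixes A B :: "complex set"
  assumes "a \<in> A" "a \<noteq> 0" "b \<in> B" "b \<noteq> 0"
  shows "ideal_mult A B \<noteq> {0}"
proof
  assume "ideal_mult A B = {0}"
  then have "a * b = 0" using im_prod[OF assms(1,3)] by blast
  then show False using assms(2,4) by simp
qed

section \<open>Number field basics\<close>

locale nf =
  fixes F :: "complex set"
  assumes nf: "number_field F"
begin

abbreviation OF where "OF \<equiv> ring_of_integers F"

lemma sub: "subfield_C F" using nf unfolding number_field_def by blast

lemma F_0[simp, intro]: "0 \<in> F" and F_1[simp, intro]: "1 \<in> F"
  using sub unfolding subfield_C_def by auto

lemma F_add[intro]: "x \<in> F \<Longrightarrow> y \<in> F \<Longrightarrow> x + y \<in> F"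
  and F_mult[intro]: "x \<in> F \<Longrightarrow> y \<in> F \<Longrightarrow> x * y \<in> F"
  and F_uminus[intro]: "x \<in> F \<Longrightarrow> - x \<in> F"
  and F_inverse[intro]: "x \<in> F \<Longrightarrow> inverse x \<in> F"
  using sub unfolding subfield_C_def by auto

lemma F_diff[intro]: "x \<in> F \<Longrightarrow> y \<in> F \<Longrightarrow> x - y \<in> F"
  using F_add[of x "-y"] F_uminus[of y] by simp

lemma F_divide[intro]: "x \<in> F \<Longrightarrow> y \<in> F \<Longrightarrow> x / y \<in> F"
  using F_mult[of x "inverse y"] F_inverse[of y] by (simp add: divide_inverse)

lemma F_of_nat[intro]: "of_nat n \<in> F"
  by (induction n) auto

lemma F_of_int[intro]: "of_int k \<in> F"
proof (cases "k \<ge> 0")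
  case True then show ?thesis using F_of_nat[of "nat k"] by simp
next
  case False then show ?thesis using F_uminus[OF F_of_nat[of "nat (-k)"]] by simp
qed

lemma O_iff: "x \<in> OF \<longleftrightarrow> x \<in> F \<and> algebraic_int x"
  unfolding ring_of_integers_def by simp

lemma O_F[intro]: "x \<in> OF \<Longrightarrow> x \<in> F" and O_alg[intro]: "x \<in> OF \<Longrightarrow> algebraic_int x"
  by (auto simp: O_iff)

lemma O_sub: "OF \<subseteq> F" by auto

lemma O_0[simp, intro]: "0 \<in> OF" and O_1[simp, intro]: "1 \<in> OF"
  by (auto simp: O_iff)

lemma O_add[intro]: "x \<in> OF \<Longrightarrow> y \<in> OF \<Longrightarrow> x + y \<in> OF"
  and O_mult[intro]: "x \<in> OF \<Longrightarrow> y \<in> OF \<Longrightarrow> x * y \<in> OF"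
  and O_uminus[intro]: "x \<in> OF \<Longrightarrow> - x \<in> OF"
  and O_diff[intro]: "x \<in> OF \<Longrightarrow> y \<in> OF \<Longrightarrow> x - y \<in> OF"
  by (auto simp: O_iff intro: algebraic_int_plus algebraic_int_times algebraic_int_diff)

lemma O_of_int[intro]: "of_int k \<in> OF"
  by (auto simp: O_iff)

lemma O_sum[intro]: "(\<And>i. i \<in> I \<Longrightarrow> f i \<in> OF) \<Longrightarrow> sum f I \<in> OF"
  by (induction I rule: infinite_finite_induct) auto

lemma O_power[intro]: "x \<in> OF \<Longrightarrow> x ^ n \<in> OF"
  by (induction n) auto

lemma O_poly_int[intro]: "x \<in> OF \<Longrightarrow> poly (map_poly of_int p) x \<in> OF"
  by (simp add: poly_altdef) (intro O_sum O_mult O_power; simp add: O_of_int)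

definition oid :: "complex set \<Rightarrow> bool" where
  "oid I \<longleftrightarrow> I \<subseteq> OF \<and> 0 \<in> I \<and> (\<forall>x\<in>I. \<forall>y\<in>I. x + y \<in> I) \<and> (\<forall>r\<in>OF. \<forall>x\<in>I. r * x \<in> I)"

definition omod :: "complex set \<Rightarrow> bool" where
  "omod M \<longleftrightarrow> M \<subseteq> F \<and> 0 \<in> M \<and> (\<forall>x\<in>M. \<forall>y\<in>M. x + y \<in> M) \<and> (\<forall>r\<in>OF. \<forall>x\<in>M. r * x \<in> M)"

lemma oidI:
  assumes "I \<subseteq> OF" "0 \<in> I" "\<And>x y. x \<in> I \<Longrightarrow> y \<in> I \<Longrightarrow> x + y \<in> I"
    "\<And>r x. r \<in> OF \<Longrightarrow> x \<in> I \<Longrightarrow> r * x \<in> I"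
  shows "oid I"
  using assms unfolding oid_def by blast

lemma omodI:
  assumes "M \<subseteq> F" "0 \<in> M" "\<And>x y. x \<in> M \<Longrightarrow> y \<in> M \<Longrightarrow> x + y \<in> M"
    "\<And>r x. r \<in> OF \<Longrightarrow> x \<in> M \<Longrightarrow> r * x \<in> M"
  shows "omod M"
  using assms unfolding omod_def by blast

lemma oidD:
  assumes "oid I"
  shows "I \<subseteq> OF" "0 \<in> I" "\<And>x y. x \<in> I \<Longrightarrow> y \<in> I \<Longrightarrow> x + y \<in> I"
    "\<And>r x. r \<in> OF \<Longrightarrow> x \<in> I \<Longrightarrow> r * x \<in> I"
  using assms unfolding oid_def by blast+

lemma omodD:
  assumes "omod M"
  shows "M \<subseteq> F" "0 \<in> M" "\<And>x y. x \<in> M \<Longrightarrow> y \<in> M \<Longrightarrow> x + y \<in> M"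
    "\<And>r x. r \<in> OF \<Longrightarrow> x \<in> M \<Longrightarrow> r * x \<in> M"
  using assms unfolding omod_def by blast+

lemma oid_omod: "oid I \<Longrightarrow> omod I"
  unfolding oid_def omod_def by auto

lemma omod_uminus: "omod M \<Longrightarrow> x \<in> M \<Longrightarrow> - x \<in> M"
  using omodD(4)[of M "-1" x] by auto

lemma omod_diff: "omod M \<Longrightarrow> x \<in> M \<Longrightarrow> y \<in> M \<Longrightarrow> x - y \<in> M"
  using omodD(3)[of M x "-y"] omod_uminus[of M y] by simp

lemma omod_sum: "omod M \<Longrightarrow> (\<And>i. i \<in> I \<Longrightarrow> f i \<in> M) \<Longrightarrow> sum f I \<in> M"
  by (induction I rule: infinite_finite_induct) (auto dest: omodD)

lemma oid_O: "oid OF" by (rule oidI) auto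

lemma omod_O: "omod OF" by (rule oid_omod[OF oid_O])

lemma omod_im: "omod A \<Longrightarrow> omod B \<Longrightarrow> omod (ideal_mult A B)"
proof (rule omodI)
  assume A: "omod A" and B: "omod B"
  show "ideal_mult A B \<subseteq> F"
    by (rule im_subset) (use omodD[OF A] omodD[OF B] in auto)
  show "\<And>r x. r \<in> OF \<Longrightarrow> x \<in> ideal_mult A B \<Longrightarrow> r * x \<in> ideal_mult A B"
    by (rule im_scal_left) (use omodD[OF A] in auto)
qed auto

lemma oid_im: "oid A \<Longrightarrow> omod B \<Longrightarrow> ideal_mult A B \<subseteq> OF \<Longrightarrow> oid (ideal_mult A B)"
proof -
  assume A: "oid A" and B: "omod B" and sub: "ideal_mult A B \<subseteq> OF"
  have M: "omod (ideal_mult A B)" by (rule omod_im[OF oid_omod[OF A] B])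
  show ?thesis by (rule oidI[OF sub omodD(2)[OF M] omodD(3)[OF M] omodD(4)[OF M]])
qed

lemma oid_im2: "oid A \<Longrightarrow> oid B \<Longrightarrow> oid (ideal_mult A B)"
proof (rule oid_im[OF _ oid_omod])
  assume "oid A" "oid B"
  then show "ideal_mult A B \<subseteq> OF"
    by (intro im_subset) (auto dest!: oidD(1))
qed

lemma im_O_left: "omod M \<Longrightarrow> ideal_mult OF M = M"
proof
  assume M: "omod M"
  show "ideal_mult OF M \<subseteq> M" by (rule im_subset) (use omodD[OF M] in auto)
  show "M \<subseteq> ideal_mult OF M"
  proof
    fix x assume "x \<in> M"
    then have "1 * x \<in> ideal_mult OF M" by (intro im_prod) auto
    then show "x \<in> ideal_mult OF M" by simp
  qed
qed

lemma im_O_right: "omod M \<Longrightarrow> ideal_mult M OF = M"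
  using im_O_left by (simp add: im_comm)

lemma oid_sub_im: "oid I \<Longrightarrow> omod M \<Longrightarrow> M \<subseteq> OF \<Longrightarrow> ideal_mult I M \<subseteq> I"
  by (rule im_subset) (auto dest: oidD simp: mult.commute[of _ "_ :: complex"])

lemma integral_ideal_iff: "integral_ideal F I \<longleftrightarrow> oid I \<and> I \<noteq> {0}"
proof
  assume "integral_ideal F I"
  then show "oid I \<and> I \<noteq> {0}"
    unfolding integral_ideal_def fractional_ideal_def oid_def by blast
next
  assume I: "oid I \<and> I \<noteq> {0}"
  have "\<forall>x\<in>I. 1 * x \<in> OF" using I oidD(1) by auto
  then show "integral_ideal F I"
    using I O_sub unfolding integral_ideal_def fractional_ideal_def oid_def
    by (intro conjI) (auto intro!: bexI[of _ 1])
qed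

definition pid :: "complex \<Rightarrow> complex set" where
  "pid a = (\<lambda>r. a * r) ` OF"

lemma pid_mem: "r \<in> OF \<Longrightarrow> a * r \<in> pid a"
  unfolding pid_def by auto

lemma pid_self: "a \<in> pid a" using pid_mem[of 1 a] by simp

lemma oid_pid: "a \<in> OF \<Longrightarrow> oid (pid a)"
  unfolding pid_def by (rule oidI) (auto simp: distrib_left[symmetric] mult.left_commute intro!: image_eqI)

lemma pid_subset: "oid I \<Longrightarrow> a \<in> I \<Longrightarrow> pid a \<subseteq> I"
  unfolding pid_def by (auto dest: oidD simp: mult.commute[of a])

definition isum :: "complex set \<Rightarrow> complex set \<Rightarrow> complex set" where
  "isum I J = {x + y | x y. x \<in> I \<and> y \<in> J}"

lemma oid_isum: "oid I \<Longrightarrow> oid J \<Longrightarrow> oid (isum I J)"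
proof (rule oidI)
  assume I: "oid I" and J: "oid J"
  note oI = oidD[OF I] and oJ = oidD[OF J]
  show "isum I J \<subseteq> OF" using oI(1) oJ(1) by (auto simp: isum_def)
  show "0 \<in> isum I J" using oI(2) oJ(2) unfolding isum_def by force
  show "x + y \<in> isum I J" if xy: "x \<in> isum I J" "y \<in> isum I J" for x y
  proof -
    obtain a b c d where "a \<in> I" "b \<in> J" "c \<in> I" "d \<in> J" "x = a + b" "y = c + d"
      using xy unfolding isum_def by blast
    then show ?thesis unfolding isum_def
      by (intro CollectI exI[of _ "a + c"] exI[of _ "b + d"]) (auto simp: oI(3) oJ(3) algebra_simps)
  qed
  show "r * x \<in> isum I J" if rx: "r \<in> OF" "x \<in> isum I J" for r x
  proof -
    obtain a b where "a \<in> I" "b \<in> J" "x = a + b"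
      using rx unfolding isum_def by blast
    moreover have "r * a \<in> I" "r * b \<in> J" using rx(1) \<open>a \<in> I\<close> \<open>b \<in> J\<close> oI(4) oJ(4) by auto
    ultimately show ?thesis unfolding isum_def
      by (intro CollectI exI[of _ "r * a"] exI[of _ "r * b"]) (simp add: distrib_left)
  qed
qed

lemma isum_left: "oid J \<Longrightarrow> I \<subseteq> isum I J"
  unfolding isum_def by (force dest: oidD(2))

lemma isum_right: "oid I \<Longrightarrow> J \<subseteq> isum I J"
  unfolding isum_def by (force dest: oidD(2))

end

context nf
begin

lemma int_in_ideal_aux:
  fixes p :: "int poly"
  assumes I: "oid I" and x: "x \<in> I" "x \<noteq> 0"
  shows "p \<noteq> 0 \<Longrightarrow> poly (map_poly of_int p) x = 0 \<Longrightarrow> \<exists>m::int. m \<noteq> 0 \<and> of_int m \<in> I"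
proof (induction p rule: pCons_induct)
  case 0
  then show ?case by simp
next
  case (pCons a q)
  have xO: "x \<in> OF" using I x oidD(1) by blast
  have mp: "map_poly (of_int :: int \<Rightarrow> complex) (pCons a q) = pCons (of_int a) (map_poly of_int q)"
    by (intro poly_eqI) (simp add: coeff_map_poly coeff_pCons split: nat.splits)
  have eq: "of_int a + x * poly (map_poly of_int q) x = 0"
    using pCons.prems(2) unfolding mp poly_pCons .
  show ?case
  proof (cases "a = 0")
    case False
    have "poly (map_poly of_int q) x \<in> OF" using xO by (rule O_poly_int)
    then have "(- poly (map_poly of_int q) x) * x \<in> I" using oidD(4)[OF I] x(1) by blast
    moreover have "of_int a = - (x * poly (map_poly of_int q) x)"
      using eq by (simp only: eq_neg_iff_add_eq_0)
    then have "(- poly (map_poly of_int q) x) * x = of_int a" by (simp add: mult.commute)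
    ultimately show ?thesis using False by (intro exI[of _ a]) simp
  next
    case True
    then have "q \<noteq> 0" using pCons.hyps by simp
    moreover have "poly (map_poly of_int q) x = 0" using eq True x(2) by simp
    ultimately show ?thesis using pCons.IH by blast
  qed
qed

lemma int_in_ideal:
  assumes I: "oid I" and x: "x \<in> I" "x \<noteq> 0"
  shows "\<exists>m::int. m > 0 \<and> of_int m \<in> I"
proof -
  have "x \<in> OF" using I x oidD(1) by blast
  then have "algebraic_int x" by blast
  then obtain p where p: "poly (map_poly of_int p) x = 0" "lead_coeff p = (1::int)"
    unfolding algebraic_int_altdef_ipoly by blast
  have "p \<noteq> 0" using p(2) by auto
  then obtain m :: int where m: "m \<noteq> 0" "of_int m \<in> I"
    using int_in_ideal_aux[OF I x _ p(1)] by blast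
  show ?thesis
  proof (cases "m > 0")
    case True then show ?thesis using m by blast
  next
    case False
    have "(-1) * of_int m \<in> I" using oidD(4)[OF I, of "-1"] m(2) by auto
    then show ?thesis using False m(1) by (intro exI[of _ "-m"]) simp
  qed
qed

subsection \<open>Linear dependence over the rationals\<close>

lemma rat_dep:
  obtains n where "\<And>X. finite X \<Longrightarrow> X \<subseteq> F \<Longrightarrow> card X > n \<Longrightarrow>
     \<exists>u::complex \<Rightarrow> rat. (\<exists>v\<in>X. u v \<noteq> 0) \<and> (\<Sum>v\<in>X. of_rat (u v) * v) = 0"
proof -
  interpret Q: vector_space "\<lambda>(r::rat) (x::complex). of_rat r * x"
    by unfold_locales (auto simp: algebra_simps of_rat_add of_rat_mult)
  obtain B where B: "finite B" "B \<subseteq> F" "\<And>x. x \<in> F \<Longrightarrow> \<exists>c :: complex \<Rightarrow> rat. x = (\<Sum>b\<in>B. of_rat (c b) * b)"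
    using nf unfolding number_field_def by blast
  have FB: "F \<subseteq> Q.span B"
  proof
    fix x assume "x \<in> F"
    then obtain c where "x = (\<Sum>b\<in>B. of_rat (c b) * b)" using B(3) by blast
    then show "x \<in> Q.span B" unfolding Q.span_explicit using B(1) by blast
  qed
  show ?thesis
  proof (rule that[of "card B"])
    fix X :: "complex set" assume X: "finite X" "X \<subseteq> F" "card X > card B"
    have "Q.dependent X"
    proof (rule ccontr)
      assume "\<not> Q.dependent X"
      then have "card X \<le> card B" using Q.independent_span_bound[OF B(1), of X] X(2) FB by blast
      then show False using X(3) by simp
    qed
    then show "\<exists>u::complex \<Rightarrow> rat. (\<exists>v\<in>X. u v \<noteq> 0) \<and> (\<Sum>v\<in>X. of_rat (u v) * v) = 0"
      using Q.dependent_finite[OF X(1)] by simp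
  qed
qed

lemma int_rel:
  fixes u :: "complex \<Rightarrow> rat"
  assumes X: "finite X" and nz: "v0 \<in> X" "u v0 \<noteq> 0" and rel: "(\<Sum>v\<in>X. of_rat (u v) * v) = 0"
  shows "\<exists>c::complex \<Rightarrow> int. (\<exists>v\<in>X. c v \<noteq> 0) \<and> (\<Sum>v\<in>X. of_int (c v) * v) = 0"
proof -
  define num where "num v = fst (quotient_of (u v))" for v
  define den where "den v = snd (quotient_of (u v))" for v
  have den_pos: "den v > 0" for v unfolding den_def by (rule quotient_of_denom_pos')
  have u_eq: "u v = of_int (num v) / of_int (den v)" for v
    unfolding num_def den_def by (rule quotient_of_div) simp
  define D where "D = (\<Prod>w\<in>X. den w)"
  define c where "c v = num v * (\<Prod>w\<in>X - {v}. den w)" for v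
  have prod_pos: "(\<Prod>w\<in>A. den w) > 0" for A by (rule prod_pos) (use den_pos in auto)
  have cv: "of_int (c v) = of_int D * u v" if "v \<in> X" for v
  proof -
    have "D = den v * (\<Prod>w\<in>X - {v}. den w)"
      unfolding D_def using X that by (rule prod.remove)
    then have "of_int D * u v = of_int (den v * (\<Prod>w\<in>X - {v}. den w)) * (of_int (num v) / of_int (den v))"
      by (simp add: u_eq)
    also have "\<dots> = of_int (num v * (\<Prod>w\<in>X - {v}. den w))"
      using den_pos[of v] by (simp add: field_simps)
    finally show ?thesis by (simp add: c_def)
  qed
  have "(\<Sum>v\<in>X. of_int (c v) * v) = (\<Sum>v\<in>X. of_rat (of_int D) * (of_rat (u v) * v))"
  proof (rule sum.cong[OF refl])
    fix v assume "v \<in> X"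
    have "(of_int (c v) :: complex) = of_rat (of_int (c v))" by simp
    also have "\<dots> = of_rat (of_int D * u v)" using cv[OF \<open>v \<in> X\<close>] by simp
    finally show "of_int (c v) * v = of_rat (of_int D) * (of_rat (u v) * v)"
      by (simp add: of_rat_mult)
  qed
  also have "\<dots> = of_rat (of_int D) * (\<Sum>v\<in>X. of_rat (u v) * v)"
    by (simp add: sum_distrib_left)
  also have "\<dots> = 0" using rel by simp
  finally have "(\<Sum>v\<in>X. of_int (c v) * v) = 0" .
  moreover have "c v0 \<noteq> 0"
  proof
    assume "c v0 = 0"
    then have "of_int D * u v0 = 0" using cv[OF nz(1)] by simp
    moreover have "D > 0" unfolding D_def by (rule prod_pos)
    ultimately show False using nz(2) by simp
  qed
  ultimately show ?thesis using nz(1) by blast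
qed

lemma prim_rel:
  fixes l :: int
  assumes l: "l > 1" and X: "finite X"
  shows "(\<exists>v\<in>X. c v \<noteq> 0) \<Longrightarrow> (\<Sum>v\<in>X. of_int (c v) * v) = 0 \<Longrightarrow>
     \<exists>c'::complex \<Rightarrow> int. (\<exists>v\<in>X. \<not> l dvd c' v) \<and> (\<Sum>v\<in>X. of_int (c' v) * v) = 0"
proof (induction "\<Sum>v\<in>X. nat \<bar>c v\<bar>" arbitrary: c rule: less_induct)
  case less
  show ?case
  proof (cases "\<forall>v\<in>X. l dvd c v")
    case False
    then show ?thesis using less.prems(2) by blast
  next
    case True
    define c' where "c' v = c v div l" for v
    have cc: "c v = l * c' v" if "v \<in> X" for v using True that by (simp add: c'_def)
    have "of_int l * (\<Sum>v\<in>X. of_int (c' v) * v) = (\<Sum>v\<in>X. of_int (c v) * (v::complex))"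
      by (simp add: sum_distrib_left cc mult.assoc)
    then have rel': "(\<Sum>v\<in>X. of_int (c' v) * v) = 0" using less.prems(2) l by simp
    obtain v0 where v0: "v0 \<in> X" "c v0 \<noteq> 0" using less.prems(1) by blast
    have nz': "c' v0 \<noteq> 0"
    proof
      assume "c' v0 = 0"
      then have "c v0 = 0" using cc[OF v0(1)] by simp
      then show False using v0(2) by simp
    qed
    have absc: "\<bar>c v\<bar> = l * \<bar>c' v\<bar>" if "v \<in> X" for v
      using cc[OF that] l by (simp add: abs_mult)
    have le: "nat \<bar>c' v\<bar> \<le> nat \<bar>c v\<bar>" if "v \<in> X" for v
    proof -
      have "1 * \<bar>c' v\<bar> \<le> l * \<bar>c' v\<bar>" using l by (intro mult_right_mono) auto
      then show ?thesis using absc[OF that] by simp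
    qed
    have lt: "nat \<bar>c' v0\<bar> < nat \<bar>c v0\<bar>"
    proof -
      have "1 * \<bar>c' v0\<bar> < l * \<bar>c' v0\<bar>" using l nz' by (intro mult_strict_right_mono) auto
      then show ?thesis using absc[OF v0(1)] by simp
    qed
    have "(\<Sum>v\<in>X. nat \<bar>c' v\<bar>) < (\<Sum>v\<in>X. nat \<bar>c v\<bar>)"
      by (rule sum_strict_mono_ex1[OF X]) (use le lt v0(1) in auto)
    from less.hyps[OF this] nz' v0(1) rel' show ?thesis by blast
  qed
qed

end

context nf
begin

definition lindep :: "int \<Rightarrow> complex set \<Rightarrow> bool" where
  "lindep l X \<longleftrightarrow> finite X \<and> X \<subseteq> OF \<and>
     (\<forall>c::complex \<Rightarrow> int. (\<Sum>v\<in>X. of_int (c v) * v) / of_int l \<in> OF \<longrightarrow> (\<forall>v\<in>X. l dvd c v))"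

lemma lindep_bound:
  assumes l: "l > 1"
  obtains n where "\<And>X. lindep l X \<Longrightarrow> card X \<le> n"
proof -
  obtain n where n: "\<And>X. finite X \<Longrightarrow> X \<subseteq> F \<Longrightarrow> card X > n \<Longrightarrow>
     \<exists>u::complex \<Rightarrow> rat. (\<exists>v\<in>X. u v \<noteq> 0) \<and> (\<Sum>v\<in>X. of_rat (u v) * v) = 0"
    using rat_dep by blast
  show ?thesis
  proof (rule that[of n])
    fix X assume X: "lindep l X"
    show "card X \<le> n"
    proof (rule ccontr)
      assume "\<not> card X \<le> n"
      have fin: "finite X" and XO: "X \<subseteq> OF" using X by (auto simp: lindep_def)
      have "X \<subseteq> F" using XO O_sub by blast
      then obtain u :: "complex \<Rightarrow> rat" where u: "\<exists>v\<in>X. u v \<noteq> 0" "(\<Sum>v\<in>X. of_rat (u v) * v) = 0"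
        using n[OF fin] \<open>\<not> card X \<le> n\<close> by force
      then obtain v0 where "v0 \<in> X" "u v0 \<noteq> 0" by blast
      from int_rel[OF fin this u(2)] obtain c :: "complex \<Rightarrow> int"
        where c: "\<exists>v\<in>X. c v \<noteq> 0" "(\<Sum>v\<in>X. of_int (c v) * v) = 0" by blast
      from prim_rel[OF l fin c] obtain c' :: "complex \<Rightarrow> int"
        where c': "\<exists>v\<in>X. \<not> l dvd c' v" "(\<Sum>v\<in>X. of_int (c' v) * v) = 0" by blast
      have "(\<Sum>v\<in>X. of_int (c' v) * v) / of_int l \<in> OF" using c'(2) by simp
      then have "\<forall>v\<in>X. l dvd c' v" using X unfolding lindep_def by blast
      then show False using c'(1) by blast
    qed
  qed
qed

lemma fin_mod_prime:
  fixes l :: int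
  assumes l: "prime l"
  shows "\<exists>S. finite S \<and> S \<subseteq> OF \<and> (\<forall>y\<in>OF. \<exists>s\<in>S. (y - s) / of_int l \<in> OF)"
proof -
  have l1: "l > 1" using l by (rule prime_gt_1_int)
  obtain n where n: "\<And>X. lindep l X \<Longrightarrow> card X \<le> n" using lindep_bound[OF l1] by blast
  have "lindep l {}" by (simp add: lindep_def)
  then obtain X0 where X0: "lindep l X0" and X0max: "\<And>Y. lindep l Y \<Longrightarrow> card Y \<le> card X0"
    using Lattices_Big.ex_has_greatest_nat[of "lindep l" "{}" card "Suc n"] n
    by (metis less_Suc_eq_le)
  have fin: "finite X0" and XO: "X0 \<subseteq> OF" using X0 by (auto simp: lindep_def)
  have sumO: "(\<Sum>v\<in>X0. of_int (e v) * v) \<in> OF" for e :: "complex \<Rightarrow> int"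
    using XO by (intro O_sum O_mult) auto
  have lnz: "(of_int l :: complex) \<noteq> 0" using l1 by simp
  have claimA: "\<exists>e::complex \<Rightarrow> int. (y - (\<Sum>v\<in>X0. of_int (e v) * v)) / of_int l \<in> OF" if y: "y \<in> OF" for y
  proof (cases "y \<in> X0")
    case True
    have "(\<Sum>v\<in>X0. of_int (if v = y then 1 else 0) * v) = y"
      using fin True by (simp add: if_distrib[of "\<lambda>z. of_int z * _"] sum.delta' cong: if_cong)
    then show ?thesis by (intro exI[of _ "\<lambda>v. if v = y then 1 else 0"]) simp
  next
    case False
    define X' where "X' = insert y X0"
    have cardX': "card X' = Suc (card X0)" using fin False by (simp add: X'_def)
    have "\<not> lindep l X'" using X0max[of X'] cardX' by auto
    moreover have "finite X'" "X' \<subseteq> OF" using fin XO y by (auto simp: X'_def)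
    ultimately obtain c :: "complex \<Rightarrow> int" where
      c: "(\<Sum>v\<in>X'. of_int (c v) * v) / of_int l \<in> OF" "\<exists>v\<in>X'. \<not> l dvd c v"
      unfolding lindep_def by blast
    have sumX': "(\<Sum>v\<in>X'. of_int (c v) * v) = of_int (c y) * y + (\<Sum>v\<in>X0. of_int (c v) * v)"
      unfolding X'_def using fin False by simp
    show ?thesis
    proof (cases "l dvd c y")
      case True
      then obtain k where k: "c y = l * k" by blast
      have "(\<Sum>v\<in>X0. of_int (c v) * v) / of_int l =
              (\<Sum>v\<in>X'. of_int (c v) * v) / of_int l - of_int k * y"
        using lnz unfolding sumX' k by (simp add: field_simps)
      also have "\<dots> \<in> OF" using c(1) y by (intro O_diff O_mult) auto
      finally have "\<forall>v\<in>X0. l dvd c v" using X0 unfolding lindep_def by blast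
      then have "\<forall>v\<in>X'. l dvd c v" using True by (simp add: X'_def)
      then show ?thesis using c(2) by blast
    next
      case False
      then have "coprime l (c y)" using l by (intro prime_imp_coprime)
      then have g1: "gcd (c y) l = 1" by (simp add: coprime_imp_gcd_eq_1 gcd.commute)
      obtain u w where uw: "u * c y + w * l = gcd (c y) l" using bezout_int by blast
      have uw1: "u * c y + w * l = 1" using uw g1 by simp
      define e where "e v = - u * c v" for v
      have "y - (\<Sum>v\<in>X0. of_int (e v) * v) = y + of_int u * (\<Sum>v\<in>X0. of_int (c v) * v)"
        by (simp add: e_def sum_distrib_left sum_negf mult.assoc)
      also have "\<dots> = y + of_int u * ((\<Sum>v\<in>X'. of_int (c v) * v) - of_int (c y) * y)"
        unfolding sumX' by simp
      also have "\<dots> = of_int (u * c y + w * l) * y - of_int (u * c y) * y + of_int u * (\<Sum>v\<in>X'. of_int (c v) * v)"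
        unfolding uw1 by (simp add: algebra_simps)
      also have "\<dots> = of_int l * (of_int w * y + of_int u * ((\<Sum>v\<in>X'. of_int (c v) * v) / of_int l))"
        using lnz by (simp add: field_simps)
      finally have "(y - (\<Sum>v\<in>X0. of_int (e v) * v)) / of_int l =
          of_int w * y + of_int u * ((\<Sum>v\<in>X'. of_int (c v) * v) / of_int l)"
        using lnz by simp
      also have "\<dots> \<in> OF" using c(1) y by (intro O_add O_mult) auto
      finally show ?thesis by blast
    qed
  qed
  define S where "S = (\<lambda>d. \<Sum>v\<in>X0. of_int (d v) * v) ` (PiE X0 (\<lambda>_. {0..<l}))"
  have "finite S" unfolding S_def using fin by (intro finite_imageI finite_PiE) auto
  moreover have "S \<subseteq> OF" unfolding S_def using sumO by blast
  moreover have "\<exists>s\<in>S. (y - s) / of_int l \<in> OF" if y: "y \<in> OF" for y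
  proof -
    obtain e :: "complex \<Rightarrow> int" where e: "(y - (\<Sum>v\<in>X0. of_int (e v) * v)) / of_int l \<in> OF"
      using claimA[OF y] by blast
    define d where "d = restrict (\<lambda>v. e v mod l) X0"
    have d: "d \<in> PiE X0 (\<lambda>_. {0..<l})" unfolding d_def using l1 by auto
    have "(\<Sum>v\<in>X0. of_int (e v) * v) - (\<Sum>v\<in>X0. of_int (d v) * v) =
          (\<Sum>v\<in>X0. of_int l * (of_int (e v div l) * v))"
      unfolding sum_subtractf[symmetric]
    proof (rule sum.cong[OF refl])
      fix v assume "v \<in> X0"
      have "e v = l * (e v div l) + e v mod l" by simp
      then have "(of_int (e v) :: complex) = of_int l * of_int (e v div l) + of_int (e v mod l)"
        by (metis of_int_add of_int_mult)
      then show "of_int (e v) * v - of_int (d v) * v = of_int l * (of_int (e v div l) * v)"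
        using \<open>v \<in> X0\<close> by (simp add: d_def algebra_simps)
    qed
    then have "(y - (\<Sum>v\<in>X0. of_int (d v) * v)) / of_int l =
        (y - (\<Sum>v\<in>X0. of_int (e v) * v)) / of_int l + (\<Sum>v\<in>X0. of_int (e v div l) * v)"
      using lnz by (simp add: field_simps sum_distrib_left)
    also have "\<dots> \<in> OF" by (intro O_add e sumO)
    finally show ?thesis unfolding S_def using d by blast
  qed
  ultimately show ?thesis by blast
qed

lemma fin_mod:
  fixes m :: int
  assumes "m > 0"
  shows "\<exists>S. finite S \<and> S \<subseteq> OF \<and> (\<forall>y\<in>OF. \<exists>s\<in>S. (y - s) / of_int m \<in> OF)"
  using assms
proof (induction "nat m" arbitrary: m rule: less_induct)
  case less
  show ?case
  proof (cases "m = 1")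
    case True
    then show ?thesis by (intro exI[of _ "{0}"]) auto
  next
    case False
    then have "nat m \<noteq> 1" using less.prems by simp
    then obtain q where q: "prime q" "q dvd nat m" using prime_factor_nat by blast
    define l where "l = int q"
    have l: "prime l" using q(1) by (simp add: l_def)
    have "int q dvd int (nat m)" using q(2) by (simp only: int_dvd_int_iff)
    then have "l dvd m" using less.prems by (simp add: l_def)
    then obtain m' where m': "m = l * m'" by blast
    have l1: "l > 1" using l by (rule prime_gt_1_int)
    have m'pos: "m' > 0" using less.prems m' l1 by (simp add: zero_less_mult_iff)
    have "nat m' < nat m" using m' l1 m'pos by simp
    from less.hyps[OF this m'pos] obtain S' where S': "finite S'" "S' \<subseteq> OF"
      "\<And>y. y \<in> OF \<Longrightarrow> \<exists>s\<in>S'. (y - s) / of_int m' \<in> OF" by blast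
    from fin_mod_prime[OF l] obtain Sl where Sl: "finite Sl" "Sl \<subseteq> OF"
      "\<And>y. y \<in> OF \<Longrightarrow> \<exists>s\<in>Sl. (y - s) / of_int l \<in> OF" by blast
    define S where "S = (\<lambda>(a, b). a + of_int m' * b) ` (S' \<times> Sl)"
    have "finite S" using S' Sl by (simp add: S_def)
    moreover have "S \<subseteq> OF" using S'(2) Sl(2) by (auto simp: S_def)
    moreover have "\<exists>s\<in>S. (y - s) / of_int m \<in> OF" if y: "y \<in> OF" for y
    proof -
      obtain s' where s': "s' \<in> S'" "(y - s') / of_int m' \<in> OF" using S'(3)[OF y] by blast
      define z where "z = (y - s') / of_int m'"
      obtain s where s: "s \<in> Sl" "(z - s) / of_int l \<in> OF" using Sl(3)[of z] s'(2) unfolding z_def by blast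
      have nz: "(of_int m' :: complex) \<noteq> 0" "(of_int l :: complex) \<noteq> 0" using m'pos l1 by auto
      have "(y - (s' + of_int m' * s)) / of_int m = (z - s) / of_int l"
        unfolding z_def m' using nz by (simp add: field_simps)
      moreover have "s' + of_int m' * s \<in> S" unfolding S_def using s'(1) s(1) by force
      ultimately show ?thesis using s(2) by metis
    qed
    ultimately show ?thesis by blast
  qed
qed

end

context nf
begin

lemma oid_one: "oid I \<Longrightarrow> 1 \<in> I \<Longrightarrow> I = OF"
proof
  assume I: "oid I" and one: "1 \<in> I"
  show "I \<subseteq> OF" using oidD(1)[OF I] .
  show "OF \<subseteq> I"
  proof
    fix r assume "r \<in> OF"
    then have "r * 1 \<in> I" using oidD(4)[OF I] one by blast
    then show "r \<in> I" by simp
  qed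
qed

lemma oid_nonzero_elem: "I \<noteq> {0} \<Longrightarrow> oid I \<Longrightarrow> \<exists>x\<in>I. x \<noteq> (0::complex)"
  using oidD(2) by blast

lemma oid_uminus: "oid I \<Longrightarrow> x \<in> I \<Longrightarrow> - x \<in> I"
  using omod_uminus[OF oid_omod] .

lemma oid_diff: "oid I \<Longrightarrow> x \<in> I \<Longrightarrow> y \<in> I \<Longrightarrow> x - y \<in> I"
  using omod_diff[OF oid_omod] .

lemma oid_mult_right: "oid I \<Longrightarrow> x \<in> I \<Longrightarrow> r \<in> OF \<Longrightarrow> x * r \<in> I"
  using oidD(4)[of I r x] by (simp add: mult.commute)

lemma oid_sum: "oid I \<Longrightarrow> (\<And>i. i \<in> A \<Longrightarrow> f i \<in> I) \<Longrightarrow> sum f A \<in> I"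
  using omod_sum[OF oid_omod] .

lemma ideal_int_mod:
  assumes I: "oid I" "I \<noteq> {0}"
  obtains m :: int and S where "m > 0" "of_int m \<in> I" "finite S" "S \<subseteq> OF"
    "\<And>y. y \<in> OF \<Longrightarrow> \<exists>s\<in>S. (y - s) / of_int m \<in> OF"
proof -
  obtain x where "x \<in> I" "x \<noteq> 0" using oid_nonzero_elem[OF I(2,1)] by blast
  then obtain m :: int where m: "m > 0" "of_int m \<in> I" using int_in_ideal[OF I(1)] by blast
  obtain S where "finite S" "S \<subseteq> OF" "\<And>y. y \<in> OF \<Longrightarrow> \<exists>s\<in>S. (y - s) / of_int m \<in> OF"
    using fin_mod[OF m(1)] by blast
  then show ?thesis using that m by blast
qed

lemma oid_fg:
  assumes I: "oid I" "I \<noteq> {0}"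
  shows "\<exists>G. finite G \<and> G \<subseteq> I \<and> (\<exists>g\<in>G. g \<noteq> 0) \<and>
           (\<forall>x\<in>I. \<exists>r. (\<forall>g\<in>G. r g \<in> OF) \<and> x = (\<Sum>g\<in>G. r g * g))"
proof -
  obtain m :: int and S where m: "m > 0" "of_int m \<in> I" and S: "finite S" "S \<subseteq> OF"
    "\<And>y. y \<in> OF \<Longrightarrow> \<exists>s\<in>S. (y - s) / of_int m \<in> OF"
    using ideal_int_mod[OF I] by blast
  define G where "G = insert (of_int m) (S \<inter> I)"
  have fin: "finite G" using S(1) by (simp add: G_def)
  have sub: "G \<subseteq> I" using m(2) by (auto simp: G_def)
  have nz: "\<exists>g\<in>G. g \<noteq> 0" using m(1) by (auto simp: G_def)
  have repr: "\<exists>r. (\<forall>g\<in>G. r g \<in> OF) \<and> x = (\<Sum>g\<in>G. r g * g)" if x: "x \<in> I" for x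
  proof -
    have xO: "x \<in> OF" using x oidD(1)[OF I(1)] by blast
    obtain s where s: "s \<in> S" "(x - s) / of_int m \<in> OF" using S(3)[OF xO] by blast
    define z where "z = (x - s) / of_int m"
    have mnz: "(of_int m :: complex) \<noteq> 0" using m(1) by simp
    have xs: "x = s + z * of_int m" using mnz by (simp add: z_def)
    have zO: "z \<in> OF" using s(2) by (simp add: z_def)
    have "z * of_int m \<in> I" using oidD(4)[OF I(1) zO m(2)] .
    then have "s \<in> I" using oid_diff[OF I(1) x] xs by (metis add_diff_cancel_right')
    then have sG: "s \<in> G" using s(1) by (simp add: G_def)
    have mG: "of_int m \<in> G" by (simp add: G_def)
    define r where "r g = (if g = s then 1 else 0) + (if g = of_int m then z else 0)" for g
    have rO: "\<forall>g\<in>G. r g \<in> OF" using s(2) unfolding r_def z_def by auto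
    have "(\<Sum>g\<in>G. r g * g) = (\<Sum>g\<in>G. (if g = s then g else 0) + (if g = of_int m then z * g else 0))"
      by (rule sum.cong) (auto simp: r_def distrib_right)
    also have "\<dots> = (\<Sum>g\<in>G. (if g = s then g else 0)) + (\<Sum>g\<in>G. (if g = of_int m then z * g else 0))"
      by (rule sum.distrib)
    also have "\<dots> = s + z * of_int m"
      using fin sG mG by (simp add: sum.delta')
    finally show ?thesis using xs rO by (intro exI[of _ r]) auto
  qed
  show ?thesis using fin sub nz repr by blast
qed

lemma sup_finite:
  assumes I: "oid I" "I \<noteq> {0}"
  shows "finite {J. oid J \<and> I \<subseteq> J}"
proof -
  obtain m :: int and S where m: "m > 0" "of_int m \<in> I" and S: "finite S" "S \<subseteq> OF"
    "\<And>y. y \<in> OF \<Longrightarrow> \<exists>s\<in>S. (y - s) / of_int m \<in> OF"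
    using ideal_int_mod[OF I] by blast
  have mnz: "(of_int m :: complex) \<noteq> 0" using m(1) by simp
  have key: "J1 \<subseteq> J2" if J: "oid J1" "I \<subseteq> J1" "oid J2" "I \<subseteq> J2" "J1 \<inter> S = J2 \<inter> S" for J1 J2
  proof
    fix x assume x: "x \<in> J1"
    have xO: "x \<in> OF" using x oidD(1)[OF J(1)] by blast
    obtain s where s: "s \<in> S" "(x - s) / of_int m \<in> OF" using S(3)[OF xO] by blast
    define z where "z = (x - s) / of_int m"
    have xs: "x = s + z * of_int m" using mnz by (simp add: z_def)
    have zO: "z \<in> OF" using s(2) by (simp add: z_def)
    have mz1: "z * of_int m \<in> J1" using oidD(4)[OF J(1) zO] J(2) m(2) by blast
    have mz2: "z * of_int m \<in> J2" using oidD(4)[OF J(3) zO] J(4) m(2) by blast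
    have "s \<in> J1" using oid_diff[OF J(1) x mz1] xs by (metis add_diff_cancel_right')
    then have "s \<in> J2" using s(1) J(5) by blast
    then show "x \<in> J2" using xs oidD(3)[OF J(3) _ mz2] by simp
  qed
  have "inj_on (\<lambda>J. J \<inter> S) {J. oid J \<and> I \<subseteq> J}"
    by (rule inj_onI) (use key in blast)
  moreover have "(\<lambda>J. J \<inter> S) ` {J. oid J \<and> I \<subseteq> J} \<subseteq> Pow S" by auto
  ultimately show ?thesis using S(1) by (meson finite_Pow_iff finite_imageD finite_subset)
qed

lemma integrality:
  assumes I: "oid I" "I \<noteq> {0}" and y: "y \<in> F" and yI: "\<And>x. x \<in> I \<Longrightarrow> y * x \<in> I"
  shows "y \<in> OF"
proof -
  obtain G where G: "finite G" "G \<subseteq> I" "\<exists>g\<in>G. g \<noteq> 0"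
    "\<And>x. x \<in> I \<Longrightarrow> \<exists>r. (\<forall>g\<in>G. r g \<in> OF) \<and> x = (\<Sum>g\<in>G. r g * g)"
    using oid_fg[OF I] by blast
  have "algebraic_int y"
  proof (rule integral_crit2[OF G(1) G(3)])
    fix w assume "w \<in> G"
    then have "y * w \<in> I" using yI G(2) by blast
    then obtain r where "\<forall>g\<in>G. r g \<in> OF" "y * w = (\<Sum>g\<in>G. r g * g)" using G(4) by blast
    then show "\<exists>f. (\<forall>w'\<in>G. algebraic_int (f w')) \<and> y * w = (\<Sum>w'\<in>G. f w' * w')"
      by (intro exI[of _ r]) auto
  qed
  then show ?thesis using y by (simp add: O_iff)
qed

definition pri :: "complex set \<Rightarrow> bool" where
  "pri P \<longleftrightarrow> oid P \<and> P \<noteq> {0} \<and> P \<noteq> OF \<and> (\<forall>x\<in>OF. \<forall>y\<in>OF. x * y \<in> P \<longrightarrow> x \<in> P \<or> y \<in> P)"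

lemma prime_ideal_iff: "prime_ideal F P \<longleftrightarrow> pri P"
  unfolding prime_ideal_def pri_def integral_ideal_iff by blast

lemma priD:
  assumes "pri P"
  shows "oid P" "P \<noteq> {0}" "P \<noteq> OF" "\<And>x y. x \<in> OF \<Longrightarrow> y \<in> OF \<Longrightarrow> x * y \<in> P \<Longrightarrow> x \<in> P \<or> y \<in> P"
  using assms unfolding pri_def by blast+

lemma pri_power_notin:
  assumes P: "pri P" and x: "x \<in> OF" "x \<notin> P"
  shows "x ^ k \<notin> P"
proof (induction k)
  case 0
  show ?case
  proof
    assume "x ^ 0 \<in> P"
    then have "P = OF" using oid_one[OF priD(1)[OF P]] by simp
    then show False using priD(3)[OF P] by blast
  qed
next
  case (Suc k)
  have xk: "x ^ k \<in> OF" using x(1) by blast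
  show ?case
  proof
    assume "x ^ Suc k \<in> P"
    then have "x * x ^ k \<in> P" by simp
    then have "x \<in> P \<or> x ^ k \<in> P" using priD(4)[OF P x(1) xk] by blast
    then show False using x(2) Suc.IH by blast
  qed
qed

lemma pri_max:
  assumes P: "pri P" and J: "oid J" "P \<subseteq> J"
  shows "J = P \<or> J = OF"
proof (rule ccontr)
  assume "\<not> (J = P \<or> J = OF)"
  then obtain x where x: "x \<in> J" "x \<notin> P" using J(2) by blast
  have P': "oid P" "P \<noteq> {0}" using priD[OF P] by auto
  have xO: "x \<in> OF" using x(1) oidD(1)[OF J(1)] by blast
  obtain m :: int and S where m: "m > 0" "of_int m \<in> P" and S: "finite S" "S \<subseteq> OF"
    "\<And>y. y \<in> OF \<Longrightarrow> \<exists>s\<in>S. (y - s) / of_int m \<in> OF"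
    using ideal_int_mod[OF P'] by blast
  have mnz: "(of_int m :: complex) \<noteq> 0" using m(1) by simp
  define f where "f k = (SOME s. s \<in> S \<and> (x ^ k - s) / of_int m \<in> OF)" for k :: nat
  have f: "f k \<in> S \<and> (x ^ k - f k) / of_int m \<in> OF" for k
    unfolding f_def by (rule someI_ex) (use S(3) xO in blast)
  have "\<not> inj_on f {0..card S}"
  proof
    assume "inj_on f {0..card S}"
    then have "card (f ` {0..card S}) = card {0..card S}" by (rule card_image)
    moreover have "card (f ` {0..card S}) \<le> card S" using f S(1) by (intro card_mono) auto
    ultimately show False by simp
  qed
  then obtain i j where ij: "i \<noteq> j" "f i = f j" unfolding inj_on_def by blast
  have main: "x ^ a * (1 - x ^ (b - a)) \<in> P" if ab: "a < b" "f a = f b" for a b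
  proof -
    have "x ^ a - x ^ b = ((x ^ a - f a) / of_int m - (x ^ b - f b) / of_int m) * of_int m"
      using mnz ab(2) by (simp add: field_simps)
    also have "\<dots> \<in> P"
    proof (rule oidD(4)[OF P'(1) _ m(2)])
      show "(x ^ a - f a) / of_int m - (x ^ b - f b) / of_int m \<in> OF"
        using f[of a] f[of b] by (intro O_diff) auto
    qed
    finally have "x ^ a - x ^ b \<in> P" .
    moreover have "x ^ b = x ^ a * x ^ (b - a)" using ab(1) by (simp flip: power_add)
    ultimately show ?thesis by (simp add: algebra_simps)
  qed
  obtain a b where ab: "a < b" "f a = f b" using ij by (metis linorder_neqE_nat)
  have "x ^ a * (1 - x ^ (b - a)) \<in> P" using main[OF ab] .
  moreover have "x ^ a \<in> OF" "1 - x ^ (b - a) \<in> OF" using xO by auto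
  ultimately have "1 - x ^ (b - a) \<in> P"
    using priD(4)[OF P] pri_power_notin[OF P xO x(2), of a] by blast
  then have in1: "1 - x ^ (b - a) \<in> J" using J(2) by blast
  have "b - a = Suc (b - a - 1)" using ab(1) by simp
  then have "x ^ (b - a) = x * x ^ (b - a - 1)" by (metis power_Suc)
  then have in2: "x ^ (b - a) \<in> J" using oid_mult_right[OF J(1) x(1), of "x ^ (b - a - 1)"] xO by auto
  have "1 \<in> J" using oidD(3)[OF J(1) in1 in2] by simp
  then have "J = OF" using oid_one[OF J(1)] by blast
  then show False using \<open>\<not> (J = P \<or> J = OF)\<close> by blast
qed

end

context nf
begin

definition iprod :: "complex set list \<Rightarrow> complex set" where
  "iprod Ps = foldr ideal_mult Ps OF"

lemma iprod_Nil[simp]: "iprod [] = OF" and iprod_Cons[simp]: "iprod (P # Ps) = ideal_mult P (iprod Ps)"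
  by (simp_all add: iprod_def)

lemma oid_iprod: "(\<And>P. P \<in> set Ps \<Longrightarrow> oid P) \<Longrightarrow> oid (iprod Ps)"
  by (induction Ps) (auto intro: oid_O oid_im2)

lemma iprod_append: "(\<And>P. P \<in> set (xs @ ys) \<Longrightarrow> oid P) \<Longrightarrow> iprod (xs @ ys) = ideal_mult (iprod xs) (iprod ys)"
proof (induction xs)
  case Nil
  have "oid (iprod ys)" using Nil by (intro oid_iprod) auto
  then show ?case by (simp add: im_O_left oid_omod)
next
  case (Cons P xs)
  then show ?case by (simp add: im_assoc)
qed

lemma nonzero_mono: "oid I \<Longrightarrow> I \<noteq> {0} \<Longrightarrow> I \<subseteq> J \<Longrightarrow> J \<noteq> {0}"
proof
  assume "oid I" "I \<noteq> {0}" "I \<subseteq> J" "J = {0}"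
  then obtain x where "x \<in> I" "x \<noteq> 0" using oid_nonzero_elem by blast
  then show False using \<open>I \<subseteq> J\<close> \<open>J = {0}\<close> by blast
qed

definition sup :: "complex set \<Rightarrow> complex set set" where
  "sup I = {J. oid J \<and> I \<subseteq> J}"

lemma sup_card_less:
  assumes I: "oid I" "I \<noteq> {0}" and J: "oid J" "I \<subset> J"
  shows "card (sup J) < card (sup I)"
proof (rule psubset_card_mono)
  show "finite (sup I)" using sup_finite[OF I] by (simp add: sup_def)
  show "sup J \<subset> sup I"
  proof
    show "sup J \<subseteq> sup I" using J(2) by (auto simp: sup_def)
    have "I \<in> sup I" using I by (simp add: sup_def)
    moreover have "I \<notin> sup J" using J(2) by (auto simp: sup_def)
    ultimately show "sup J \<noteq> sup I" by blast
  qed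
qed

lemma im_isum_subset:
  assumes I: "oid I" and x: "x \<in> OF" and y: "y \<in> OF" and xy: "x * y \<in> I"
  shows "ideal_mult (isum I (pid x)) (isum I (pid y)) \<subseteq> I"
proof (rule im_subset)
  show "0 \<in> I" using oidD(2)[OF I] .
  show "a + b \<in> I" if "a \<in> I" "b \<in> I" for a b using oidD(3)[OF I] that by blast
  fix u v assume u: "u \<in> isum I (pid x)" and v: "v \<in> isum I (pid y)"
  obtain a r where a: "a \<in> I" "r \<in> OF" "u = a + x * r" using u unfolding isum_def pid_def by blast
  obtain b s where b: "b \<in> I" "s \<in> OF" "v = b + y * s" using v unfolding isum_def pid_def by blast
  have aO: "a \<in> OF" "b \<in> OF" using a(1) b(1) oidD(1)[OF I] by auto
  have "u * v = a * v + b * (x * r) + (x * y) * (r * s)"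
    using a(3) b(3) by (simp add: algebra_simps)
  moreover have "v \<in> OF" using b(3) aO(2) y b(2) by auto
  then have "a * v \<in> I" using oid_mult_right[OF I a(1)] by blast
  moreover have "b * (x * r) \<in> I" using oid_mult_right[OF I b(1)] x a(2) by auto
  moreover have "(x * y) * (r * s) \<in> I" using oid_mult_right[OF I xy] a(2) b(2) by auto
  ultimately show "u * v \<in> I" using oidD(3)[OF I] by metis
qed

lemma contains_prime_product:
  assumes "oid I" "I \<noteq> {0}"
  shows "\<exists>Ps. (\<forall>P\<in>set Ps. pri P) \<and> iprod Ps \<subseteq> I"
  using assms
proof (induction "card (sup I)" arbitrary: I rule: less_induct)
  case less
  note I = less.prems
  show ?case
  proof (cases "I = OF")
    case True
    then show ?thesis by (intro exI[of _ "[]"]) simp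
  next
    case notO: False
    show ?thesis
    proof (cases "pri I")
      case True
      have "iprod [I] = I" using I by (simp add: im_O_right oid_omod)
      then show ?thesis using True by (intro exI[of _ "[I]"]) auto
    next
      case False
      then obtain x y where xy: "x \<in> OF" "y \<in> OF" "x * y \<in> I" "x \<notin> I" "y \<notin> I"
        using I notO unfolding pri_def by blast
      define Ix where "Ix = isum I (pid x)"
      define Iy where "Iy = isum I (pid y)"
      have oIx: "oid Ix" "oid Iy" unfolding Ix_def Iy_def using I(1) oid_pid xy(1,2) by (auto intro: oid_isum)
      have sx: "I \<subset> Ix"
      proof
        show "I \<subseteq> Ix" unfolding Ix_def by (rule isum_left[OF oid_pid[OF xy(1)]])
        have "x \<in> Ix" unfolding Ix_def using isum_right[OF I(1)] pid_self by blast
        then show "I \<noteq> Ix" using xy(4) by blast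
      qed
      have sy: "I \<subset> Iy"
      proof
        show "I \<subseteq> Iy" unfolding Iy_def by (rule isum_left[OF oid_pid[OF xy(2)]])
        have "y \<in> Iy" unfolding Iy_def using isum_right[OF I(1)] pid_self by blast
        then show "I \<noteq> Iy" using xy(5) by blast
      qed
      have nzx: "Ix \<noteq> {0}" by (rule nonzero_mono[OF I(1) I(2)]) (use sx in blast)
      have nzy: "Iy \<noteq> {0}" by (rule nonzero_mono[OF I(1) I(2)]) (use sy in blast)
      obtain Px where Px: "\<forall>P\<in>set Px. pri P" "iprod Px \<subseteq> Ix"
        using less.hyps[OF sup_card_less[OF I oIx(1) sx] oIx(1) nzx] by blast
      obtain Py where Py: "\<forall>P\<in>set Py. pri P" "iprod Py \<subseteq> Iy"
        using less.hyps[OF sup_card_less[OF I oIx(2) sy] oIx(2) nzy] by blast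
      have "iprod (Px @ Py) = ideal_mult (iprod Px) (iprod Py)"
        using Px(1) Py(1) by (intro iprod_append) (auto simp: pri_def)
      also have "\<dots> \<subseteq> ideal_mult Ix Iy" by (rule im_mono[OF Px(2) Py(2)])
      also have "\<dots> \<subseteq> I" unfolding Ix_def Iy_def by (rule im_isum_subset[OF I(1) xy(1-3)])
      finally show ?thesis using Px(1) Py(1) by (intro exI[of _ "Px @ Py"]) auto
    qed
  qed
qed

lemma prime_contains_factor:
  assumes P: "pri P"
  shows "(\<And>Q. Q \<in> set Qs \<Longrightarrow> oid Q) \<Longrightarrow> iprod Qs \<subseteq> P \<Longrightarrow> \<exists>Q\<in>set Qs. Q \<subseteq> P"
proof (induction Qs)
  case Nil
  then have "OF \<subseteq> P" by simp
  then have "P = OF" using oidD(1)[OF priD(1)[OF P]] by blast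
  then show ?case using priD(3)[OF P] by blast
next
  case (Cons Q Qs)
  show ?case
  proof (cases "Q \<subseteq> P")
    case True then show ?thesis by simp
  next
    case False
    then obtain q where q: "q \<in> Q" "q \<notin> P" by blast
    have "iprod Qs \<subseteq> P"
    proof
      fix r assume r: "r \<in> iprod Qs"
      have "q * r \<in> P" using Cons.prems(2) im_prod[OF q(1) r] by auto
      moreover have "q \<in> OF" using q(1) Cons.prems(1) oidD(1) by auto
      moreover have "r \<in> OF" using r oid_iprod[of Qs] Cons.prems(1) oidD(1) by auto
      ultimately show "r \<in> P" using priD(4)[OF P] q(2) by blast
    qed
    then show ?thesis using Cons by auto
  qed
qed

definition finv :: "complex set \<Rightarrow> complex set" where
  "finv I = {x \<in> F. \<forall>i\<in>I. x * i \<in> OF}"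

lemma omod_finv: "omod (finv I)"
proof (rule omodI)
  show "finv I \<subseteq> F" by (auto simp: finv_def)
  show "0 \<in> finv I" by (auto simp: finv_def)
  show "x + y \<in> finv I" if "x \<in> finv I" "y \<in> finv I" for x y
    using that by (auto simp: finv_def distrib_right)
  show "r * x \<in> finv I" if "r \<in> OF" "x \<in> finv I" for r x
    using that by (auto simp: finv_def mult.assoc)
qed

lemma O_sub_finv: "oid I \<Longrightarrow> OF \<subseteq> finv I"
  by (auto simp: finv_def dest: oidD(1))

lemma im_finv_sub: "ideal_mult I (finv I) \<subseteq> OF"
  by (rule im_subset) (auto simp: finv_def mult.commute)

lemma pri_finv_nontrivial:
  assumes P: "pri P"
  shows "\<exists>y\<in>finv P. y \<notin> OF"
proof -
  have P': "oid P" "P \<noteq> {0}" using priD[OF P] by auto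
  obtain a where a: "a \<in> P" "a \<noteq> 0" using oid_nonzero_elem[OF P'(2,1)] by blast
  have aO: "a \<in> OF" using a(1) oidD(1)[OF P'(1)] by blast
  have opa: "oid (pid a)" using oid_pid[OF aO] .
  have "pid a \<noteq> {0}" using pid_self[of a] a(2) by blast
  then obtain Ps0 where "\<forall>P\<in>set Ps0. pri P" "iprod Ps0 \<subseteq> pid a"
    using contains_prime_product[OF opa] by blast
  then obtain Ps where Ps: "\<forall>P\<in>set Ps. pri P" "iprod Ps \<subseteq> pid a"
    and minimal: "\<And>Qs. (\<forall>P\<in>set Qs. pri P) \<Longrightarrow> iprod Qs \<subseteq> pid a \<Longrightarrow> length Ps \<le> length Qs"
    using ex_has_least_nat[of "\<lambda>Qs. (\<forall>P\<in>set Qs. pri P) \<and> iprod Qs \<subseteq> pid a" Ps0 length] by blast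
  have oPs: "\<And>Q. Q \<in> set Ps \<Longrightarrow> oid Q" using Ps(1) priD(1) by blast
  have "iprod Ps \<subseteq> P" using Ps(2) pid_subset[OF P'(1) a(1)] by blast
  then obtain Q where Q: "Q \<in> set Ps" "Q \<subseteq> P" using prime_contains_factor[OF P oPs] by blast
  have "P = Q \<or> P = OF" using pri_max[OF Ps(1)[rule_format, OF Q(1)] P'(1) Q(2)] .
  then have QP: "Q = P" using priD(3)[OF P] by blast
  obtain xs ys where split: "Ps = xs @ Q # ys" using split_list[OF Q(1)] by blast
  define R where "R = iprod (xs @ ys)"
  have oxy: "\<And>Q'. Q' \<in> set (xs @ ys) \<Longrightarrow> oid Q'" using oPs split by auto
  have oR: "oid R" unfolding R_def using oxy by (rule oid_iprod)
  have "iprod Ps = ideal_mult (iprod xs) (ideal_mult Q (iprod ys))"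
    using oPs unfolding split by (subst iprod_append) auto
  also have "\<dots> = ideal_mult Q R"
    unfolding R_def using oxy by (subst iprod_append) (auto simp: im_assoc[symmetric] im_comm[of "iprod xs" Q])
  finally have PsR: "iprod Ps = ideal_mult P R" using QP by simp
  have "\<not> R \<subseteq> pid a"
  proof
    assume "R \<subseteq> pid a"
    moreover have "\<forall>P\<in>set (xs @ ys). pri P" using Ps(1) split by auto
    ultimately have "length Ps \<le> length (xs @ ys)" using minimal unfolding R_def by blast
    then show False using split by simp
  qed
  then obtain b where b: "b \<in> R" "b \<notin> pid a" by blast
  have bO: "b \<in> OF" using b(1) oidD(1)[OF oR] by blast
  define y where "y = b / a"
  have yF: "y \<in> F" unfolding y_def using bO aO by blast
  have "y \<in> finv P"
    unfolding finv_def
  proof (intro CollectI conjI ballI yF)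
    fix p assume p: "p \<in> P"
    have "p * b \<in> pid a" using im_prod[OF p b(1)] PsR Ps(2) by blast
    then obtain r where r: "r \<in> OF" "p * b = a * r" unfolding pid_def by blast
    have "y * p = r" using r(2) a(2) unfolding y_def by (simp add: field_simps)
    then show "y * p \<in> OF" using r(1) by simp
  qed
  moreover have "y \<notin> OF"
  proof
    assume "y \<in> OF"
    then have "a * y \<in> pid a" by (rule pid_mem)
    then show False using b(2) a(2) unfolding y_def by simp
  qed
  ultimately show ?thesis by blast
qed

lemma pri_finv:
  assumes P: "pri P"
  shows "ideal_mult P (finv P) = OF"
proof -
  have P': "oid P" "P \<noteq> {0}" using priD[OF P] by auto
  define M where "M = ideal_mult P (finv P)"
  have oM: "oid M" unfolding M_def by (rule oid_im[OF P'(1) omod_finv im_finv_sub])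
  have PM: "P \<subseteq> M"
  proof
    fix p assume "p \<in> P"
    moreover have "1 \<in> finv P" using O_sub_finv[OF P'(1)] by blast
    ultimately have "p * 1 \<in> M" unfolding M_def by (rule im_prod)
    then show "p \<in> M" by simp
  qed
  have "M \<noteq> P"
  proof
    assume MP: "M = P"
    obtain y where y: "y \<in> finv P" "y \<notin> OF" using pri_finv_nontrivial[OF P] by blast
    have "y \<in> OF"
    proof (rule integrality[OF P'])
      show "y \<in> F" using y(1) by (simp add: finv_def)
      fix x assume "x \<in> P"
      then have "x * y \<in> M" unfolding M_def using y(1) by (rule im_prod)
      then show "y * x \<in> P" using MP by (simp add: mult.commute)
    qed
    then show False using y(2) by blast
  qed
  then show ?thesis using pri_max[OF P oM PM] unfolding M_def by blast
qed

lemma maximal_above: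
  assumes I: "oid I" "I \<noteq> {0}" "I \<noteq> OF"
  shows "\<exists>P. pri P \<and> I \<subseteq> P"
proof -
  define A where "A = {J. oid J \<and> I \<subseteq> J \<and> J \<noteq> OF}"
  have "finite A" using sup_finite[OF I(1,2)] unfolding A_def by (rule finite_subset[rotated]) auto
  moreover have "A \<noteq> {}" using I unfolding A_def by blast
  ultimately obtain P where P: "P \<in> A" and Pmax: "\<And>J. J \<in> A \<Longrightarrow> P \<subseteq> J \<Longrightarrow> P = J"
    using finite_has_maximal[of A] by blast
  have oP: "oid P" "I \<subseteq> P" "P \<noteq> OF" using P by (auto simp: A_def)
  have "pri P"
    unfolding pri_def
  proof (intro conjI ballI impI oP(1) oP(3))
    show "P \<noteq> {0}" by (rule nonzero_mono[OF I(1) I(2) oP(2)])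
    fix x y assume x: "x \<in> OF" and y: "y \<in> OF" and xy: "x * y \<in> P"
    show "x \<in> P \<or> y \<in> P"
    proof (cases "x \<in> P")
      case True then show ?thesis by blast
    next
      case False
      then have "x \<notin> P" .
      define J where "J = isum P (pid x)"
      have oJ: "oid J" unfolding J_def by (rule oid_isum[OF oP(1) oid_pid[OF x]])
      have PJ: "P \<subseteq> J" unfolding J_def by (rule isum_left[OF oid_pid[OF x]])
      have "x \<in> J" unfolding J_def using isum_right[OF oP(1)] pid_self by blast
      then have "J \<noteq> P" using \<open>x \<notin> P\<close> by blast
      then have "J \<notin> A" using Pmax PJ by blast
      then have "J = OF" using oJ PJ oP(2) unfolding A_def by blast
      then have "1 \<in> J" by simp
      then obtain p r where pr: "p \<in> P" "r \<in> OF" "1 = p + x * r" unfolding J_def isum_def pid_def by blast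
      have "y = y * (p + x * r)" using pr(3) by simp
      also have "\<dots> = p * y + (x * y) * r" by (simp add: algebra_simps)
      finally have yeq: "y = p * y + (x * y) * r" .
      have "p * y \<in> P" using oid_mult_right[OF oP(1) pr(1) y] .
      moreover have "(x * y) * r \<in> P" using oid_mult_right[OF oP(1) xy pr(2)] .
      ultimately have "y \<in> P" using oidD(3)[OF oP(1)] yeq by metis
      then show ?thesis by blast
    qed
  qed
  then show ?thesis using oP(2) by blast
qed

theorem invertible:
  assumes "oid I" "I \<noteq> {0}"
  shows "\<exists>J. omod J \<and> ideal_mult I J = OF"
  using assms
proof (induction "card (sup I)" arbitrary: I rule: less_induct)
  case less
  note I = less.prems
  show ?case
  proof (cases "I = OF")
    case True
    then show ?thesis using omod_O im_O_left[OF omod_O] by blast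
  next
    case False
    obtain P where P: "pri P" "I \<subseteq> P" using maximal_above[OF I False] by blast
    have oP: "oid P" using priD(1)[OF P(1)] .
    define I' where "I' = ideal_mult I (finv P)"
    have I'O: "I' \<subseteq> OF"
    proof -
      have "I' \<subseteq> ideal_mult P (finv P)" unfolding I'_def by (rule im_mono[OF P(2)]) simp
      then show ?thesis using pri_finv[OF P(1)] by simp
    qed
    have oI': "oid I'" unfolding I'_def by (rule oid_im[OF I(1) omod_finv I'O[unfolded I'_def]])
    have II': "I \<subseteq> I'"
    proof
      fix x assume "x \<in> I"
      moreover have "1 \<in> finv P" using O_sub_finv[OF oP] by blast
      ultimately have "x * 1 \<in> I'" unfolding I'_def by (rule im_prod)
      then show "x \<in> I'" by simp
    qed
    have "I' \<noteq> I"
    proof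
      assume eq: "I' = I"
      have "finv P \<subseteq> OF"
      proof
        fix y assume y: "y \<in> finv P"
        show "y \<in> OF"
        proof (rule integrality[OF I])
          show "y \<in> F" using y by (simp add: finv_def)
          fix x assume "x \<in> I"
          then have "x * y \<in> I'" unfolding I'_def using y by (rule im_prod)
          then show "y * x \<in> I" using eq by (simp add: mult.commute)
        qed
      qed
      then have "ideal_mult P (finv P) \<subseteq> ideal_mult P OF" by (rule im_mono[OF order.refl])
      then have "OF \<subseteq> P" using pri_finv[OF P(1)] im_O_right[OF oid_omod[OF oP]] by simp
      then show False using priD(3)[OF P(1)] oidD(1)[OF oP] by blast
    qed
    then have sI: "I \<subset> I'" using II' by blast
    have nz: "I' \<noteq> {0}" by (rule nonzero_mono[OF I(1) I(2)]) (use sI in blast)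
    obtain J' where J': "omod J'" "ideal_mult I' J' = OF"
      using less.hyps[OF sup_card_less[OF I oI' sI] oI' nz] by blast
    have "ideal_mult I (ideal_mult (finv P) J') = OF"
      using J'(2) unfolding I'_def by (simp add: im_assoc)
    moreover have "omod (ideal_mult (finv P) J')" by (rule omod_im[OF omod_finv J'(1)])
    ultimately show ?thesis by blast
  qed
qed

end

lemma im_swap: "ideal_mult A (ideal_mult B C) = ideal_mult B (ideal_mult A C)"
proof -
  have "ideal_mult A (ideal_mult B C) = ideal_mult (ideal_mult A B) C" by (simp only: im_assoc)
  also have "\<dots> = ideal_mult (ideal_mult B A) C" by (simp only: im_comm[of A B])
  also have "\<dots> = ideal_mult B (ideal_mult A C)" by (simp only: im_assoc)
  finally show ?thesis .
qed

context nf
begin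

lemma cancel_sub:
  assumes P: "oid P" "P \<noteq> {0}" and A: "omod A" and B: "omod B"
    and sub: "ideal_mult P A \<subseteq> ideal_mult P B"
  shows "A \<subseteq> B"
proof -
  obtain J where J: "omod J" "ideal_mult P J = OF" using invertible[OF P] by blast
  have "A = ideal_mult A OF" using im_O_right[OF A] by simp
  also have "\<dots> = ideal_mult A (ideal_mult P J)" using J(2) by simp
  also have "\<dots> = ideal_mult (ideal_mult P A) J" by (simp only: im_swap[of A P J] im_assoc)
  also have "\<dots> \<subseteq> ideal_mult (ideal_mult P B) J" by (rule im_mono[OF sub order.refl])
  also have "\<dots> = ideal_mult B (ideal_mult P J)" by (simp only: im_swap[of B P J] im_assoc)
  also have "\<dots> = ideal_mult B OF" using J(2) by simp
  also have "\<dots> = B" using im_O_right[OF B] by simp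
  finally show ?thesis .
qed

lemma pri_mult_neq:
  assumes P: "pri P" and C: "oid C" "C \<noteq> {0}"
  shows "ideal_mult P C \<noteq> C"
proof
  assume eq: "ideal_mult P C = C"
  obtain J where J: "omod J" "ideal_mult C J = OF" using invertible[OF C] by blast
  have "P = ideal_mult P OF" using im_O_right[OF oid_omod[OF priD(1)[OF P]]] by simp
  also have "\<dots> = ideal_mult P (ideal_mult C J)" using J(2) by simp
  also have "\<dots> = ideal_mult (ideal_mult P C) J" by (simp only: im_assoc)
  also have "\<dots> = OF" using eq J(2) by simp
  finally show False using priD(3)[OF P] by blast
qed

lemma three_way:
  assumes P: "pri P" and H: "oid H" "H \<noteq> {0}" and Fi: "oid Fi"
    and sub1: "ideal_mult H P \<subseteq> Fi" and sub2: "Fi \<subseteq> H"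
  shows "Fi = ideal_mult H P \<or> Fi = H"
proof -
  obtain J where J: "omod J" "ideal_mult H J = OF" using invertible[OF H] by blast
  define Q where "Q = ideal_mult Fi J"
  have QO: "Q \<subseteq> OF"
  proof -
    have "Q \<subseteq> ideal_mult H J" unfolding Q_def by (rule im_mono[OF sub2 order.refl])
    then show ?thesis using J(2) by simp
  qed
  have oQ: "oid Q" unfolding Q_def by (rule oid_im[OF Fi J(1) QO[unfolded Q_def]])
  have PQ: "P \<subseteq> Q"
  proof -
    have "P = ideal_mult OF P" using im_O_left[OF oid_omod[OF priD(1)[OF P]]] by simp
    also have "\<dots> = ideal_mult (ideal_mult H J) P" using J(2) by simp
    also have "\<dots> = ideal_mult (ideal_mult H P) J" by (simp only: im_assoc im_comm[of J P])
    also have "\<dots> \<subseteq> Q" unfolding Q_def by (rule im_mono[OF sub1 order.refl])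
    finally show ?thesis .
  qed
  have "Fi = ideal_mult OF Fi" using im_O_left[OF oid_omod[OF Fi]] by simp
  also have "\<dots> = ideal_mult (ideal_mult H J) Fi" using J(2) by simp
  also have "\<dots> = ideal_mult H Q" unfolding Q_def by (simp only: im_assoc im_comm[of J Fi])
  finally have FQ: "Fi = ideal_mult H Q" .
  have "Q = P \<or> Q = OF" using pri_max[OF P oQ PQ] .
  then show ?thesis
  proof
    assume "Q = P" then show ?thesis using FQ by simp
  next
    assume "Q = OF" then show ?thesis using FQ im_O_right[OF oid_omod[OF H(1)]] by simp
  qed
qed

definition colon :: "complex set \<Rightarrow> complex set \<Rightarrow> complex set" where
  "colon f P = {r \<in> OF. \<forall>p\<in>P. r * p \<in> f}"

lemma dvd_iff: "ideal_dvd F P G \<longleftrightarrow> (\<exists>C. oid C \<and> C \<noteq> {0} \<and> G = ideal_mult P C)"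
  unfolding ideal_dvd_def integral_ideal_iff by blast

lemma colon_prod:
  assumes P: "pri P" and G: "oid G" "G \<noteq> {0}"
  shows "colon (ideal_mult P G) P = G"
proof
  have oP: "oid P" using priD(1)[OF P] .
  show "G \<subseteq> colon (ideal_mult P G) P"
  proof
    fix r assume r: "r \<in> G"
    have "r \<in> OF" using r oidD(1)[OF G(1)] by blast
    moreover have "r * p \<in> ideal_mult P G" if "p \<in> P" for p
      using im_prod[OF that r] by (simp add: mult.commute)
    ultimately show "r \<in> colon (ideal_mult P G) P" by (simp add: colon_def)
  qed
  show "colon (ideal_mult P G) P \<subseteq> G"
  proof
    fix r assume r: "r \<in> colon (ideal_mult P G) P"
    then have rO: "r \<in> OF" and rP: "\<And>p. p \<in> P \<Longrightarrow> r * p \<in> ideal_mult P G" by (auto simp: colon_def)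
    have "ideal_mult P (pid r) \<subseteq> ideal_mult P G"
    proof (rule im_subset)
      fix p x assume p: "p \<in> P" and x: "x \<in> pid r"
      obtain s where s: "s \<in> OF" "x = r * s" using x unfolding pid_def by blast
      have "omod (ideal_mult P G)" by (rule omod_im[OF oid_omod[OF oP] oid_omod[OF G(1)]])
      then have "s * (r * p) \<in> ideal_mult P G"
        using rP[OF p] s(1) omodD(4) by blast
      then show "p * x \<in> ideal_mult P G" using s(2) by (simp add: algebra_simps)
    qed auto
    then have "pid r \<subseteq> G"
      using cancel_sub[OF oP priD(2)[OF P] oid_omod[OF oid_pid[OF rO]] oid_omod[OF G(1)]] by blast
    then show "r \<in> G" using pid_self by blast
  qed
qed

lemma colon_notdvd:
  assumes P: "pri P" and G: "oid G" "G \<noteq> {0}" and nd: "\<not> ideal_dvd F P G"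
  shows "colon G P = G"
proof
  have oP: "oid P" using priD(1)[OF P] .
  show "G \<subseteq> colon G P"
  proof
    fix r assume r: "r \<in> G"
    have "r \<in> OF" using r oidD(1)[OF G(1)] by blast
    moreover have "r * p \<in> G" if "p \<in> P" for p
      using oid_mult_right[OF G(1) r] that oidD(1)[OF oP] by blast
    ultimately show "r \<in> colon G P" by (simp add: colon_def)
  qed
  show "colon G P \<subseteq> G"
  proof
    fix r assume r: "r \<in> colon G P"
    then have rO: "r \<in> OF" and rP: "\<And>p. p \<in> P \<Longrightarrow> r * p \<in> G" by (auto simp: colon_def)
    define H where "H = isum G (pid r)"
    have oH: "oid H" unfolding H_def by (rule oid_isum[OF G(1) oid_pid[OF rO]])
    have GH: "G \<subseteq> H" unfolding H_def by (rule isum_left[OF oid_pid[OF rO]])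
    have nzH: "H \<noteq> {0}" by (rule nonzero_mono[OF G GH])
    have HP: "ideal_mult H P \<subseteq> G"
    proof (rule im_subset)
      show "0 \<in> G" using oidD(2)[OF G(1)] .
      show "a + b \<in> G" if "a \<in> G" "b \<in> G" for a b using oidD(3)[OF G(1)] that by blast
      fix h p assume h: "h \<in> H" and p: "p \<in> P"
      obtain a s where as: "a \<in> G" "s \<in> OF" "h = a + r * s" using h unfolding H_def isum_def pid_def by blast
      have pO: "p \<in> OF" using p oidD(1)[OF oP] by blast
      have "h * p = a * p + s * (r * p)" using as(3) by (simp add: algebra_simps)
      moreover have "a * p \<in> G" using oid_mult_right[OF G(1) as(1) pO] .
      moreover have "s * (r * p) \<in> G" using oidD(4)[OF G(1) as(2) rP[OF p]] .
      ultimately show "h * p \<in> G" using oidD(3)[OF G(1)] by metis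
    qed
    have "G = ideal_mult H P \<or> G = H" using three_way[OF P oH nzH G(1) HP GH] .
    then show "r \<in> G"
    proof
      assume "G = ideal_mult H P"
      then have "ideal_dvd F P G" unfolding dvd_iff using oH nzH by (auto simp: im_comm)
      then show ?thesis using nd by blast
    next
      assume "G = H"
      moreover have "r \<in> H" unfolding H_def using isum_right[OF G(1)] pid_self by blast
      ultimately show ?thesis by simp
    qed
  qed
qed

lemma colon_eq_cases:
  assumes P: "pri P" and G: "oid G" "G \<noteq> {0}" and f: "oid f" "ideal_mult P G \<subseteq> f"
    and col: "colon f P = G"
  shows "f = ideal_mult P G \<or> (f = G \<and> \<not> ideal_dvd F P G)"
proof -
  have oP: "oid P" using priD(1)[OF P] .
  have fG: "f \<subseteq> G"
  proof
    fix x assume x: "x \<in> f"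
    have "x \<in> OF" using x oidD(1)[OF f(1)] by blast
    moreover have "x * p \<in> f" if "p \<in> P" for p
      using oid_mult_right[OF f(1) x] that oidD(1)[OF oP] by blast
    ultimately have "x \<in> colon f P" by (simp add: colon_def)
    then show "x \<in> G" using col by simp
  qed
  have "f = ideal_mult G P \<or> f = G" using three_way[OF P G f(1) _ fG] f(2) by (simp add: im_comm)
  then show ?thesis
  proof
    assume "f = ideal_mult G P" then show ?thesis by (simp add: im_comm)
  next
    assume fG': "f = G"
    show ?thesis
    proof (cases "ideal_dvd F P G")
      case False then show ?thesis using fG' by simp
    next
      case True
      then obtain C where C: "oid C" "C \<noteq> {0}" "G = ideal_mult P C" unfolding dvd_iff by blast
      have "C \<subseteq> colon G P"
      proof
        fix c assume c: "c \<in> C"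
        have "c \<in> OF" using c oidD(1)[OF C(1)] by blast
        moreover have "c * p \<in> G" if "p \<in> P" for p
          using im_prod[OF that c] C(3) by (simp add: mult.commute)
        ultimately show "c \<in> colon G P" by (simp add: colon_def)
      qed
      then have "C \<subseteq> G" using col fG' by simp
      moreover have "G \<subseteq> C"
        unfolding C(3) by (rule im_subset) (use C(1) oidD(1)[OF oP] in \<open>auto intro: oidD(2,3,4)[OF C(1)]\<close>)
      ultimately have "ideal_mult P C = C" using C(3) by blast
      then show ?thesis using pri_mult_neq[OF P C(1,2)] by blast
    qed
  qed
qed

end

context nf
begin

lemma frac_omod: "fractional_ideal F a \<Longrightarrow> omod a"
  unfolding fractional_ideal_def omod_def by blast

lemma char_0: "character a \<xi> \<Longrightarrow> 0 \<in> a \<Longrightarrow> \<xi> 0 = 1"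
proof -
  assume c: "character a \<xi>" and a: "0 \<in> a"
  have "\<xi> (0 + 0) = \<xi> 0 * \<xi> 0" using c a unfolding character_def by blast
  moreover have "\<xi> 0 \<noteq> 0" using c a unfolding character_def by blast
  ultimately show ?thesis by simp
qed

lemma char_add: "character a \<xi> \<Longrightarrow> x \<in> a \<Longrightarrow> y \<in> a \<Longrightarrow> \<xi> (x + y) = \<xi> x * \<xi> y"
  unfolding character_def by blast

lemma char_out: "character a \<xi> \<Longrightarrow> x \<notin> a \<Longrightarrow> \<xi> x = 1"
  unfolding character_def by blast

definition cond :: "complex set \<times> (complex \<Rightarrow> complex) \<Rightarrow> complex set" where
  "cond z = {r \<in> OF. \<forall>\<alpha>\<in>fst z. snd z (r * \<alpha>) = 1}"

lemma all_charsD: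
  assumes "(a, \<xi>) \<in> all_chars F"
  shows "fractional_ideal F a" "character a \<xi>" "omod a"
  using assms frac_omod unfolding all_chars_def by auto

lemma trivial_iff_cond:
  assumes z: "(a, \<xi>) \<in> all_chars F" and g: "oid g"
  shows "(\<forall>x\<in>ideal_mult g a. \<xi> x = 1) \<longleftrightarrow> g \<subseteq> cond (a, \<xi>)"
proof
  note zz = all_charsD[OF z]
  assume triv: "\<forall>x\<in>ideal_mult g a. \<xi> x = 1"
  show "g \<subseteq> cond (a, \<xi>)"
  proof
    fix r assume r: "r \<in> g"
    have "r \<in> OF" using r oidD(1)[OF g] by blast
    moreover have "\<xi> (r * \<alpha>) = 1" if "\<alpha> \<in> a" for \<alpha> using triv im_prod[OF r that] by blast
    ultimately show "r \<in> cond (a, \<xi>)" by (simp add: cond_def)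
  qed
next
  note zz = all_charsD[OF z]
  assume sub: "g \<subseteq> cond (a, \<xi>)"
  show "\<forall>x\<in>ideal_mult g a. \<xi> x = 1"
  proof
    fix x assume "x \<in> ideal_mult g a"
    then have "x \<in> a \<and> \<xi> x = 1"
    proof (induction rule: im_induct)
      case zero
      then show ?case using omodD(2)[OF zz(3)] char_0[OF zz(2)] by simp
    next
      case (prod r \<alpha>)
      have "r \<in> cond (a, \<xi>)" using sub prod(1) by blast
      then have "r \<in> OF" "\<xi> (r * \<alpha>) = 1" using prod(2) by (auto simp: cond_def)
      then show ?case using omodD(4)[OF zz(3) _ prod(2)] by blast
    next
      case (add x y)
      then show ?case using omodD(3)[OF zz(3)] char_add[OF zz(2)] by auto
    qed
    then show "\<xi> x = 1" by blast
  qed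
qed

lemma oid_cond:
  assumes z: "(a, \<xi>) \<in> all_chars F"
  shows "oid (cond (a, \<xi>))"
proof (rule oidI)
  note zz = all_charsD[OF z]
  show "cond (a, \<xi>) \<subseteq> OF" by (auto simp: cond_def)
  show "0 \<in> cond (a, \<xi>)" using char_0[OF zz(2) omodD(2)[OF zz(3)]] by (simp add: cond_def)
  show "r + s \<in> cond (a, \<xi>)" if rs: "r \<in> cond (a, \<xi>)" "s \<in> cond (a, \<xi>)" for r s
  proof -
    have r: "r \<in> OF" "\<And>\<alpha>. \<alpha> \<in> a \<Longrightarrow> \<xi> (r * \<alpha>) = 1" using rs(1) by (auto simp: cond_def)
    have s: "s \<in> OF" "\<And>\<alpha>. \<alpha> \<in> a \<Longrightarrow> \<xi> (s * \<alpha>) = 1" using rs(2) by (auto simp: cond_def)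
    have "\<xi> ((r + s) * \<alpha>) = 1" if "\<alpha> \<in> a" for \<alpha>
    proof -
      have "\<xi> ((r + s) * \<alpha>) = \<xi> (r * \<alpha> + s * \<alpha>)" by (simp add: distrib_right)
      also have "\<dots> = \<xi> (r * \<alpha>) * \<xi> (s * \<alpha>)"
        using omodD(4)[OF zz(3) r(1) that] omodD(4)[OF zz(3) s(1) that] char_add[OF zz(2)] by blast
      finally show ?thesis using r(2)[OF that] s(2)[OF that] by simp
    qed
    then show ?thesis using r(1) s(1) by (simp add: cond_def O_add)
  qed
  show "t * r \<in> cond (a, \<xi>)" if tr: "t \<in> OF" "r \<in> cond (a, \<xi>)" for t r
  proof -
    have r: "r \<in> OF" "\<And>\<alpha>. \<alpha> \<in> a \<Longrightarrow> \<xi> (r * \<alpha>) = 1" using tr(2) by (auto simp: cond_def)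
    have "\<xi> ((t * r) * \<alpha>) = 1" if "\<alpha> \<in> a" for \<alpha>
      using r(2)[OF omodD(4)[OF zz(3) tr(1) that]] by (simp add: mult_ac)
    then show ?thesis using r(1) tr(1) by (simp add: cond_def O_mult)
  qed
qed

lemma Tchars_iff:
  assumes g: "oid g"
  shows "z \<in> Tchars F g \<longleftrightarrow> z \<in> all_chars F \<and> g \<subseteq> cond z"
proof (cases z)
  case (Pair a \<xi>)
  show ?thesis unfolding Pair Tchars_def using trivial_iff_cond[OF _ g, of a \<xi>] by auto
qed

lemma T0chars_iff:
  assumes g: "oid g" "g \<noteq> {0}"
  shows "z \<in> T0chars F g \<longleftrightarrow> z \<in> all_chars F \<and> cond z = g"
proof (cases z)
  case (Pair a \<xi>)
  show ?thesis
  proof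
    assume z0: "z \<in> T0chars F g"
    then have zT: "z \<in> Tchars F g" and prim: "\<And>g'. integral_ideal F g' \<Longrightarrow> g \<subset> g' \<Longrightarrow>
        \<not> (\<forall>x\<in>ideal_mult g' a. \<xi> x = 1)"
      unfolding T0chars_def Pair by auto
    have zA: "z \<in> all_chars F" and gc: "g \<subseteq> cond z" using Tchars_iff[OF g(1)] zT by auto
    have oc: "oid (cond z)" using oid_cond zA Pair by simp
    have "cond z = g"
    proof (rule ccontr)
      assume "cond z \<noteq> g"
      then have gs: "g \<subset> cond z" using gc by blast
      have "integral_ideal F (cond z)" unfolding integral_ideal_iff
        using oc nonzero_mono[OF g gc] by blast
      then have "\<not> (\<forall>x\<in>ideal_mult (cond z) a. \<xi> x = 1)" using prim gs by blast
      moreover have "\<forall>x\<in>ideal_mult (cond z) a. \<xi> x = 1"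
        using trivial_iff_cond[of a \<xi> "cond z"] zA oc Pair by simp
      ultimately show False by blast
    qed
    then show "z \<in> all_chars F \<and> cond z = g" using zA by blast
  next
    assume zc: "z \<in> all_chars F \<and> cond z = g"
    then have zT: "z \<in> Tchars F g" using Tchars_iff[OF g(1)] by auto
    have "\<not> (\<forall>x\<in>ideal_mult g' a. \<xi> x = 1)" if g': "integral_ideal F g'" "g \<subset> g'" for g'
    proof
      assume "\<forall>x\<in>ideal_mult g' a. \<xi> x = 1"
      moreover have "oid g'" using g' integral_ideal_iff by blast
      ultimately have "g' \<subseteq> cond (a, \<xi>)" using trivial_iff_cond[of a \<xi> g'] zc Pair by simp
      then show False using zc g'(2) Pair by auto
    qed
    then show "z \<in> T0chars F g" using zT unfolding T0chars_def Pair by auto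
  qed
qed

end

context nf
begin

lemma im_sub_right: "oid p \<Longrightarrow> omod a \<Longrightarrow> ideal_mult p a \<subseteq> a"
  by (rule im_subset) (auto dest: oidD(1) omodD)

lemma restr_all_chars:
  assumes z: "(a, \<xi>) \<in> all_chars F" and p: "oid p" "p \<noteq> {0}"
  shows "restr p (a, \<xi>) \<in> all_chars F"
proof -
  note zz = all_charsD[OF z]
  define b where "b = ideal_mult p a"
  have ba: "b \<subseteq> a" unfolding b_def by (rule im_sub_right[OF p(1) zz(3)])
  have ob: "omod b" unfolding b_def by (rule omod_im[OF oid_omod[OF p(1)] zz(3)])
  obtain d where d: "d \<in> OF" "d \<noteq> 0" "\<forall>x\<in>a. d * x \<in> OF" "a \<noteq> {0}"
    using zz(1) unfolding fractional_ideal_def by blast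
  obtain x where x: "x \<in> p" "x \<noteq> 0" using oid_nonzero_elem[OF p(2,1)] by blast
  obtain y where y: "y \<in> a" "y \<noteq> 0" using d(4) omodD(2)[OF zz(3)] by blast
  have bnz: "b \<noteq> {0}" unfolding b_def by (rule im_nonzero[OF x y])
  have dd: "\<exists>d\<in>OF. d \<noteq> 0 \<and> (\<forall>x\<in>b. d * x \<in> OF)"
    using d(1,2,3) ba by blast
  have fb: "fractional_ideal F b"
    unfolding fractional_ideal_def
    using omodD(1,2)[OF ob] bnz omodD(3)[OF ob] omodD(4)[OF ob] dd by blast
  have cb: "character b (\<lambda>x. if x \<in> b then \<xi> x else 1)"
    unfolding character_def
  proof (intro conjI ballI allI impI)
    fix x assume "x \<in> b"
    then show "(if x \<in> b then \<xi> x else 1) \<noteq> 0" using zz(2) ba unfolding character_def by auto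
  next
    fix x y assume xy: "x \<in> b" "y \<in> b"
    then have "x + y \<in> b" using omodD(3)[OF ob] by blast
    then show "(if x + y \<in> b then \<xi> (x + y) else 1) = (if x \<in> b then \<xi> x else 1) * (if y \<in> b then \<xi> y else 1)"
      using xy char_add[OF zz(2)] ba by auto
  next
    fix x assume "x \<notin> b"
    then show "(if x \<in> b then \<xi> x else 1) = 1" by simp
  qed
  have "restr p (a, \<xi>) = (b, \<lambda>x. if x \<in> b then \<xi> x else 1)"
    unfolding restr_def b_def fst_conv snd_conv by (rule refl)
  then show ?thesis unfolding all_chars_def using fb cb by simp
qed

lemma cond_restr:
  assumes z: "(a, \<xi>) \<in> all_chars F" and p: "oid p" "p \<noteq> {0}"
  shows "cond (restr p (a, \<xi>)) = colon (cond (a, \<xi>)) p"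
proof -
  note zz = all_charsD[OF z]
  define b where "b = ideal_mult p a"
  have ba: "b \<subseteq> a" unfolding b_def by (rule im_sub_right[OF p(1) zz(3)])
  have ob: "omod b" unfolding b_def by (rule omod_im[OF oid_omod[OF p(1)] zz(3)])
  have rz: "restr p (a, \<xi>) = (b, \<lambda>x. if x \<in> b then \<xi> x else 1)"
    unfolding restr_def b_def fst_conv snd_conv by (rule refl)
  show ?thesis
  proof
    show "cond (restr p (a, \<xi>)) \<subseteq> colon (cond (a, \<xi>)) p"
    proof
      fix r assume r: "r \<in> cond (restr p (a, \<xi>))"
      then have rO: "r \<in> OF" and rb: "\<And>\<beta>. \<beta> \<in> b \<Longrightarrow> \<xi> (r * \<beta>) = 1"
        using omodD(4)[OF ob] unfolding rz cond_def by auto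
      have "r * \<pi> \<in> cond (a, \<xi>)" if pi: "\<pi> \<in> p" for \<pi>
      proof -
        have "r * \<pi> \<in> OF" using rO pi oidD(1)[OF p(1)] by blast
        moreover have "\<xi> ((r * \<pi>) * \<alpha>) = 1" if "\<alpha> \<in> a" for \<alpha>
          using rb[of "\<pi> * \<alpha>"] im_prod[OF pi that] unfolding b_def by (simp add: mult.assoc)
        ultimately show ?thesis by (simp add: cond_def)
      qed
      then show "r \<in> colon (cond (a, \<xi>)) p" using rO by (simp add: colon_def)
    qed
    show "colon (cond (a, \<xi>)) p \<subseteq> cond (restr p (a, \<xi>))"
    proof
      fix r assume r: "r \<in> colon (cond (a, \<xi>)) p"
      then have rO: "r \<in> OF" and rp: "\<And>\<pi>. \<pi> \<in> p \<Longrightarrow> r * \<pi> \<in> cond (a, \<xi>)"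
        by (auto simp: colon_def)
      have "\<xi> (r * \<beta>) = 1" if "\<beta> \<in> b" for \<beta>
      proof -
        from that have "\<beta> \<in> a \<and> \<xi> (r * \<beta>) = 1" unfolding b_def
        proof (induction rule: im_induct)
          case zero
          then show ?case using omodD(2)[OF zz(3)] char_0[OF zz(2)] by simp
        next
          case (prod \<pi> \<alpha>)
          have "\<xi> ((r * \<pi>) * \<alpha>) = 1" using rp[OF prod(1)] prod(2) by (simp add: cond_def)
          moreover have "\<pi> * \<alpha> \<in> a" using omodD(4)[OF zz(3) _ prod(2)] prod(1) oidD(1)[OF p(1)] by blast
          ultimately show ?case by (simp add: mult.assoc)
        next
          case (add x y)
          have "r * x \<in> a" "r * y \<in> a" using add omodD(4)[OF zz(3) rO] by auto
          then have "\<xi> (r * x + r * y) = \<xi> (r * x) * \<xi> (r * y)" using char_add[OF zz(2)] by blast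
          then show ?case using add omodD(3)[OF zz(3)] by (simp add: distrib_left)
        qed
        then show ?thesis by blast
      qed
      moreover have "r * \<beta> \<in> b" if "\<beta> \<in> b" for \<beta> using omodD(4)[OF ob rO that] .
      ultimately show "r \<in> cond (restr p (a, \<xi>))" using rO unfolding rz cond_def by auto
    qed
  qed
qed

subsection \<open>The orbit relation\<close>

lemma embedding_mult: "embedding F \<sigma> \<Longrightarrow> x \<in> F \<Longrightarrow> y \<in> F \<Longrightarrow> \<sigma> (x * y) = \<sigma> x * \<sigma> y"
  unfolding embedding_def by blast

lemma embedding_1: "embedding F \<sigma> \<Longrightarrow> \<sigma> 1 = 1"
  unfolding embedding_def by blast

lemma tp_1: "totally_positive F 1"
  unfolding totally_positive_def
proof (intro conjI allI impI)
  fix \<sigma> assume "embedding F \<sigma>"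
  then have "\<sigma> 1 = 1" by (rule embedding_1)
  then show "\<sigma> 1 \<in> \<real>" "Re (\<sigma> 1) > 0" by simp_all
qed auto

lemma tp_F: "totally_positive F x \<Longrightarrow> x \<in> F" and tp_nz: "totally_positive F x \<Longrightarrow> x \<noteq> 0"
  unfolding totally_positive_def by auto

lemma tp_inverse:
  assumes x: "totally_positive F x"
  shows "totally_positive F (inverse x)"
  unfolding totally_positive_def
proof (intro conjI allI impI)
  have xF: "x \<in> F" and xnz: "x \<noteq> 0" using x by (auto simp: totally_positive_def)
  show "inverse x \<in> F" using xF by blast
  show "inverse x \<noteq> 0" using xnz by simp
  fix \<sigma> assume s: "embedding F \<sigma>"
  have sx: "\<sigma> x \<in> \<real>" "Re (\<sigma> x) > 0" using x s by (auto simp: totally_positive_def)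
  have "\<sigma> x * \<sigma> (inverse x) = 1"
    using embedding_mult[OF s xF F_inverse[OF xF]] embedding_1[OF s] xnz by simp
  then have inv: "\<sigma> (inverse x) = inverse (\<sigma> x)" by (rule inverse_unique[symmetric])
  obtain t where t: "\<sigma> x = of_real t" using sx(1) by (auto elim: Reals_cases)
  have "t > 0" using sx(2) t by simp
  have it: "inverse (complex_of_real t) = complex_of_real (inverse t)" by (rule of_real_inverse[symmetric])
  show "\<sigma> (inverse x) \<in> \<real>" unfolding inv t it by (rule Reals_of_real)
  show "Re (\<sigma> (inverse x)) > 0" unfolding inv t it using \<open>t > 0\<close> by simp
qed

lemma tp_mult:
  assumes x: "totally_positive F x" and y: "totally_positive F y"
  shows "totally_positive F (x * y)"
  unfolding totally_positive_def
proof (intro conjI allI impI)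
  have xF: "x \<in> F" "x \<noteq> 0" and yF: "y \<in> F" "y \<noteq> 0" using x y by (auto simp: totally_positive_def)
  show "x * y \<in> F" using xF yF by blast
  show "x * y \<noteq> 0" using xF yF by simp
  fix \<sigma> assume s: "embedding F \<sigma>"
  have sx: "\<sigma> x \<in> \<real>" "Re (\<sigma> x) > 0" using x s by (auto simp: totally_positive_def)
  have sy: "\<sigma> y \<in> \<real>" "Re (\<sigma> y) > 0" using y s by (auto simp: totally_positive_def)
  obtain t where t: "\<sigma> x = of_real t" using sx(1) by (auto elim: Reals_cases)
  obtain u where u: "\<sigma> y = of_real u" using sy(1) by (auto elim: Reals_cases)
  have m: "\<sigma> (x * y) = of_real (t * u)" using embedding_mult[OF s xF(1) yF(1)] t u by simp
  show "\<sigma> (x * y) \<in> \<real>" unfolding m by simp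
  show "Re (\<sigma> (x * y)) > 0" unfolding m using sx(2) sy(2) t u by simp
qed

lemma orbit_rel_refl: "z \<in> all_chars F \<Longrightarrow> orbit_rel F z z"
  unfolding orbit_rel_def using tp_1 by (intro conjI exI[of _ 1]) auto

lemma orbit_rel_sym:
  assumes "orbit_rel F z w" shows "orbit_rel F w z"
proof -
  obtain x where x: "totally_positive F x" "fst w = (\<lambda>\<alpha>. x * \<alpha>) ` fst z"
    "\<And>\<alpha>. \<alpha> \<in> fst z \<Longrightarrow> snd w (x * \<alpha>) = snd z \<alpha>"
    and zw: "z \<in> all_chars F" "w \<in> all_chars F"
    using assms unfolding orbit_rel_def by blast
  have xnz: "x \<noteq> 0" using tp_nz[OF x(1)] .
  have idf: "(\<lambda>\<alpha>. inverse x * (x * \<alpha>)) = (\<lambda>\<alpha>. \<alpha>)"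
  proof
    fix \<alpha> show "inverse x * (x * \<alpha>) = \<alpha>" using xnz by (simp add: mult.assoc[symmetric])
  qed
  have "(\<lambda>\<alpha>. inverse x * \<alpha>) ` fst w = (\<lambda>\<alpha>. inverse x * \<alpha>) ` ((\<lambda>\<alpha>. x * \<alpha>) ` fst z)"
    by (rule arg_cong[OF x(2)])
  also have "\<dots> = (\<lambda>\<alpha>. inverse x * (x * \<alpha>)) ` fst z" by (rule image_image)
  also have "\<dots> = fst z" unfolding idf by (rule image_ident)
  finally have A: "fst z = (\<lambda>\<alpha>. inverse x * \<alpha>) ` fst w" by (rule sym)
  have B: "snd z (inverse x * \<beta>) = snd w \<beta>" if "\<beta> \<in> fst w" for \<beta>
  proof -
    have "\<beta> \<in> (\<lambda>\<alpha>. x * \<alpha>) ` fst z" using that by (subst x(2)[symmetric])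
    then obtain \<alpha> where al: "\<alpha> \<in> fst z" "\<beta> = x * \<alpha>" by (rule imageE) (rule that)
    have ia: "inverse x * \<beta> = \<alpha>" using al(2) xnz by (simp add: mult.assoc[symmetric])
    have "snd z (inverse x * \<beta>) = snd z \<alpha>" by (simp only: ia)
    also have "\<dots> = snd w (x * \<alpha>)" by (rule x(3)[OF al(1), symmetric])
    also have "\<dots> = snd w \<beta>" by (simp only: al(2))
    finally show ?thesis .
  qed
  show ?thesis unfolding orbit_rel_def
  proof (intro conjI exI[of _ "inverse x"] ballI)
    show "w \<in> all_chars F" "z \<in> all_chars F" by (fact zw(2), fact zw(1))
    show "totally_positive F (inverse x)" by (rule tp_inverse[OF x(1)])
    show "fst z = (\<lambda>\<alpha>. inverse x * \<alpha>) ` fst w" by (fact A)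
    fix \<beta> assume "\<beta> \<in> fst w" then show "snd z (inverse x * \<beta>) = snd w \<beta>" by (rule B)
  qed
qed

lemma orbit_rel_trans:
  assumes "orbit_rel F z w" "orbit_rel F w u" shows "orbit_rel F z u"
proof -
  obtain x where x: "totally_positive F x" "fst w = (\<lambda>\<alpha>. x * \<alpha>) ` fst z"
    "\<And>\<alpha>. \<alpha> \<in> fst z \<Longrightarrow> snd w (x * \<alpha>) = snd z \<alpha>"
    and zw: "z \<in> all_chars F" "w \<in> all_chars F"
    using assms(1) unfolding orbit_rel_def by blast
  obtain y where y: "totally_positive F y" "fst u = (\<lambda>\<alpha>. y * \<alpha>) ` fst w"
    "\<And>\<alpha>. \<alpha> \<in> fst w \<Longrightarrow> snd u (y * \<alpha>) = snd w \<alpha>"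
    and u: "u \<in> all_chars F"
    using assms(2) unfolding orbit_rel_def by blast
  have "fst u = (\<lambda>\<alpha>. y * \<alpha>) ` ((\<lambda>\<alpha>. x * \<alpha>) ` fst z)" using y(2) x(2) by simp
  also have "\<dots> = (\<lambda>\<alpha>. y * (x * \<alpha>)) ` fst z" by (rule image_image)
  also have "\<dots> = (\<lambda>\<alpha>. (y * x) * \<alpha>) ` fst z" by (simp only: mult.assoc)
  finally have A: "fst u = (\<lambda>\<alpha>. (y * x) * \<alpha>) ` fst z" .
  have B: "snd u ((y * x) * \<alpha>) = snd z \<alpha>" if "\<alpha> \<in> fst z" for \<alpha>
  proof -
    have xa: "x * \<alpha> \<in> fst w" unfolding x(2) using that by (rule imageI)
    have "snd u ((y * x) * \<alpha>) = snd u (y * (x * \<alpha>))" by (simp only: mult.assoc)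
    also have "\<dots> = snd w (x * \<alpha>)" by (rule y(3)[OF xa])
    also have "\<dots> = snd z \<alpha>" by (rule x(3)[OF that])
    finally show ?thesis .
  qed
  show ?thesis unfolding orbit_rel_def
  proof (intro conjI exI[of _ "y * x"] ballI)
    show "z \<in> all_chars F" "u \<in> all_chars F" by (fact zw(1), fact u)
    show "totally_positive F (y * x)" by (rule tp_mult[OF y(1) x(1)])
    show "fst u = (\<lambda>\<alpha>. (y * x) * \<alpha>) ` fst z" by (fact A)
    fix \<alpha> assume "\<alpha> \<in> fst z" then show "snd u ((y * x) * \<alpha>) = snd z \<alpha>" by (rule B)
  qed
qed

lemma orbit_eq_iff:
  assumes "z \<in> all_chars F" "w \<in> all_chars F"
  shows "orbit F z = orbit F w \<longleftrightarrow> orbit_rel F z w"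
proof
  assume eq: "orbit F z = orbit F w"
  have "w \<in> orbit F w" using orbit_rel_refl[OF assms(2)] by (simp add: orbit_def)
  then have "w \<in> orbit F z" using eq by simp
  then show "orbit_rel F z w" by (simp add: orbit_def)
next
  assume zw: "orbit_rel F z w"
  show "orbit F z = orbit F w"
    unfolding orbit_def using zw orbit_rel_sym[OF zw] orbit_rel_trans by blast
qed

lemma cond_orbit:
  assumes zw: "orbit_rel F z w"
  shows "cond w = cond z"
proof -
  obtain x where x: "totally_positive F x" "fst w = (\<lambda>\<alpha>. x * \<alpha>) ` fst z"
    "\<And>\<alpha>. \<alpha> \<in> fst z \<Longrightarrow> snd w (x * \<alpha>) = snd z \<alpha>"
    and z: "z \<in> all_chars F"
    using zw unfolding orbit_rel_def by blast
  obtain a \<xi> where aq: "z = (a, \<xi>)" by (cases z)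
  have oa: "omod a" using all_charsD(3) z aq by simp
  have "r \<in> cond w \<longleftrightarrow> r \<in> cond z" if rO: "r \<in> OF" for r
  proof -
    have "r \<in> cond w \<longleftrightarrow> (\<forall>\<alpha>\<in>a. snd w (r * (x * \<alpha>)) = 1)"
      using rO x(2) aq by (auto simp: cond_def)
    also have "\<dots> \<longleftrightarrow> (\<forall>\<alpha>\<in>a. \<xi> (r * \<alpha>) = 1)"
    proof -
      have "snd w (r * (x * \<alpha>)) = \<xi> (r * \<alpha>)" if "\<alpha> \<in> a" for \<alpha>
        using x(3)[of "r * \<alpha>"] omodD(4)[OF oa rO that] aq by (simp add: mult.left_commute)
      then show ?thesis by auto
    qed
    also have "\<dots> \<longleftrightarrow> r \<in> cond z" using rO aq by (simp add: cond_def)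
    finally show ?thesis .
  qed
  moreover have "cond w \<subseteq> OF" "cond z \<subseteq> OF" by (auto simp: cond_def)
  ultimately show ?thesis by blast
qed

lemma im_scale:
  assumes x: "x \<noteq> 0"
  shows "ideal_mult p ((\<lambda>\<alpha>. x * \<alpha>) ` a) = (\<lambda>\<beta>. x * \<beta>) ` ideal_mult p a"
proof
  show "ideal_mult p ((\<lambda>\<alpha>. x * \<alpha>) ` a) \<subseteq> (\<lambda>\<beta>. x * \<beta>) ` ideal_mult p a"
  proof (rule im_subset)
    show "0 \<in> (\<lambda>\<beta>. x * \<beta>) ` ideal_mult p a" by (rule image_eqI[of _ _ 0]) auto
    fix \<pi> y assume "\<pi> \<in> p" "y \<in> (\<lambda>\<alpha>. x * \<alpha>) ` a"
    then obtain \<alpha> where "\<alpha> \<in> a" "y = x * \<alpha>" by blast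
    then show "\<pi> * y \<in> (\<lambda>\<beta>. x * \<beta>) ` ideal_mult p a"
      using \<open>\<pi> \<in> p\<close> by (intro image_eqI[of _ _ "\<pi> * \<alpha>"]) (auto simp: mult.left_commute)
  next
    fix u v assume "u \<in> (\<lambda>\<beta>. x * \<beta>) ` ideal_mult p a" "v \<in> (\<lambda>\<beta>. x * \<beta>) ` ideal_mult p a"
    then obtain s t where "s \<in> ideal_mult p a" "t \<in> ideal_mult p a" "u = x * s" "v = x * t" by blast
    then show "u + v \<in> (\<lambda>\<beta>. x * \<beta>) ` ideal_mult p a"
      by (intro image_eqI[of _ _ "s + t"]) (auto simp: distrib_left)
  qed
  show "(\<lambda>\<beta>. x * \<beta>) ` ideal_mult p a \<subseteq> ideal_mult p ((\<lambda>\<alpha>. x * \<alpha>) ` a)"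
  proof
    fix u assume "u \<in> (\<lambda>\<beta>. x * \<beta>) ` ideal_mult p a"
    then obtain \<beta> where b: "\<beta> \<in> ideal_mult p a" "u = x * \<beta>" by blast
    from b(1) have "x * \<beta> \<in> ideal_mult p ((\<lambda>\<alpha>. x * \<alpha>) ` a)"
    proof (induction rule: im_induct)
      case zero then show ?case by simp
    next
      case (prod \<pi> \<alpha>)
      have "\<pi> * (x * \<alpha>) \<in> ideal_mult p ((\<lambda>\<alpha>. x * \<alpha>) ` a)" using prod by (intro im_prod) auto
      then show ?case by (simp add: mult.left_commute)
    next
      case (add s t) then show ?case by (simp add: distrib_left im_add)
    qed
    then show "u \<in> ideal_mult p ((\<lambda>\<alpha>. x * \<alpha>) ` a)" using b(2) by simp
  qed
qed

lemma orbit_rel_restr: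
  assumes zw: "orbit_rel F z w" and p: "oid p" "p \<noteq> {0}"
  shows "orbit_rel F (restr p z) (restr p w)"
proof -
  obtain x where x: "totally_positive F x" "fst w = (\<lambda>\<alpha>. x * \<alpha>) ` fst z"
    "\<And>\<alpha>. \<alpha> \<in> fst z \<Longrightarrow> snd w (x * \<alpha>) = snd z \<alpha>"
    and z: "z \<in> all_chars F" and w: "w \<in> all_chars F"
    using zw unfolding orbit_rel_def by blast
  obtain a \<xi> where aq: "z = (a, \<xi>)" by (cases z)
  obtain b \<eta> where bq: "w = (b, \<eta>)" by (cases w)
  have oa: "omod a" using all_charsD(3) z aq by simp
  have xnz: "x \<noteq> 0" using tp_nz[OF x(1)] .
  have bx: "b = (\<lambda>\<alpha>. x * \<alpha>) ` a" using x(2) aq bq by simp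
  have r1: "restr p z \<in> all_chars F" using restr_all_chars[OF _ p] z aq by simp
  have r2: "restr p w \<in> all_chars F" using restr_all_chars[OF _ p] w bq by simp
  have pab: "ideal_mult p b = (\<lambda>\<beta>. x * \<beta>) ` ideal_mult p a" unfolding bx by (rule im_scale[OF xnz])
  have pa_a: "ideal_mult p a \<subseteq> a" by (rule im_sub_right[OF p(1) oa])
  have "fst (restr p w) = (\<lambda>\<beta>. x * \<beta>) ` fst (restr p z)" using pab aq bq by (simp add: restr_def)
  moreover have "snd (restr p w) (x * \<beta>) = snd (restr p z) \<beta>" if "\<beta> \<in> fst (restr p z)" for \<beta>
  proof -
    have b1: "\<beta> \<in> ideal_mult p a" using that aq by (simp add: restr_def)
    then have b2: "x * \<beta> \<in> ideal_mult p b" using pab by blast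
    have "\<eta> (x * \<beta>) = \<xi> \<beta>" using x(3)[of \<beta>] b1 pa_a aq bq by auto
    then show ?thesis using b1 b2 aq bq by (simp add: restr_def)
  qed
  ultimately show ?thesis unfolding orbit_rel_def using r1 r2 x(1) by blast
qed

end

context nf
begin

lemma oid_cond': "z \<in> all_chars F \<Longrightarrow> oid (cond z)"
  using oid_cond by (cases z) auto

lemma restr_all_chars': "z \<in> all_chars F \<Longrightarrow> oid p \<Longrightarrow> p \<noteq> {0} \<Longrightarrow> restr p z \<in> all_chars F"
  using restr_all_chars by (cases z) auto

lemma cond_restr': "z \<in> all_chars F \<Longrightarrow> oid p \<Longrightarrow> p \<noteq> {0} \<Longrightarrow> cond (restr p z) = colon (cond z) p"
  using cond_restr by (cases z) auto

lemma mem_scrT: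
  assumes g: "oid g"
  shows "Ob \<in> scrT F g \<longleftrightarrow> (\<exists>z. z \<in> all_chars F \<and> g \<subseteq> cond z \<and> Ob = orbit F z)"
proof -
  have "Ob \<in> scrT F g \<longleftrightarrow> (\<exists>z\<in>Tchars F g. Ob = orbit F z)" unfolding scrT_def by blast
  also have "\<dots> \<longleftrightarrow> (\<exists>z. z \<in> all_chars F \<and> g \<subseteq> cond z \<and> Ob = orbit F z)"
    using Tchars_iff[OF g] by blast
  finally show ?thesis .
qed

lemma mem_scrT0:
  assumes g: "oid g" "g \<noteq> {0}"
  shows "Ob \<in> scrT0 F g \<longleftrightarrow> (\<exists>z. z \<in> all_chars F \<and> cond z = g \<and> Ob = orbit F z)"
proof -
  have "Ob \<in> scrT0 F g \<longleftrightarrow> (\<exists>z\<in>T0chars F g. Ob = orbit F z)" unfolding scrT0_def by blast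
  also have "\<dots> \<longleftrightarrow> (\<exists>z. z \<in> all_chars F \<and> cond z = g \<and> Ob = orbit F z)"
    using T0chars_iff[OF g] by blast
  finally show ?thesis .
qed

lemma restr_orbit_mem:
  assumes z: "z \<in> all_chars F" and p: "oid p" "p \<noteq> {0}" and g: "oid g" "g \<noteq> {0}"
  shows "restr_orbit F p (orbit F z) \<in> scrT0 F g \<longleftrightarrow> colon (cond z) p = g"
proof -
  define w where "w = (SOME w. w \<in> orbit F z)"
  have "z \<in> orbit F z" using orbit_rel_refl[OF z] by (simp add: orbit_def)
  then have "w \<in> orbit F z" unfolding w_def by (rule someI)
  then have zw: "orbit_rel F z w" by (simp add: orbit_def)
  then have wA: "w \<in> all_chars F" by (simp add: orbit_rel_def)
  have cw: "cond w = cond z" by (rule cond_orbit[OF zw])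
  have rw: "restr p w \<in> all_chars F" by (rule restr_all_chars'[OF wA p])
  have crw: "cond (restr p w) = colon (cond z) p" using cond_restr'[OF wA p] cw by simp
  have ro: "restr_orbit F p (orbit F z) = orbit F (restr p w)" by (simp add: restr_orbit_def w_def)
  show ?thesis
  proof
    assume "restr_orbit F p (orbit F z) \<in> scrT0 F g"
    then obtain u where u: "u \<in> all_chars F" "cond u = g" "orbit F (restr p w) = orbit F u"
      unfolding ro mem_scrT0[OF g] by blast
    have "orbit_rel F (restr p w) u" using u(3) orbit_eq_iff[OF rw u(1)] by blast
    then have "cond u = cond (restr p w)" by (rule cond_orbit)
    then show "colon (cond z) p = g" using u(2) crw by simp
  next
    assume "colon (cond z) p = g"
    then have "cond (restr p w) = g" using crw by simp
    then show "restr_orbit F p (orbit F z) \<in> scrT0 F g"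
      unfolding ro mem_scrT0[OF g] using rw by blast
  qed
qed

lemma mem_scrT':
  assumes p: "oid p" "p \<noteq> {0}" and g: "oid g" "g \<noteq> {0}"
  shows "Ob \<in> scrT' F p g \<longleftrightarrow>
    (\<exists>z. z \<in> all_chars F \<and> ideal_mult p g \<subseteq> cond z \<and> colon (cond z) p = g \<and> Ob = orbit F z)"
proof -
  have og1: "oid (ideal_mult p g)" by (rule oid_im2[OF p(1) g(1)])
  have "Ob \<in> scrT' F p g \<longleftrightarrow> Ob \<in> scrT F (ideal_mult p g) \<and> restr_orbit F p Ob \<in> scrT0 F g"
    unfolding scrT'_def by blast
  also have "\<dots> \<longleftrightarrow> (\<exists>z. z \<in> all_chars F \<and> ideal_mult p g \<subseteq> cond z \<and> colon (cond z) p = g \<and> Ob = orbit F z)"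
    unfolding mem_scrT[OF og1] using restr_orbit_mem[OF _ p g] by blast
  finally show ?thesis .
qed

theorem main:
  assumes P: "pri p" and G: "oid g0" "g0 \<noteq> {0}"
  shows "(ideal_dvd F p g0 \<longrightarrow> scrT' F p g0 = scrT0 F (ideal_mult p g0))
       \<and> (\<not> ideal_dvd F p g0 \<longrightarrow>
            scrT' F p g0 = scrT0 F (ideal_mult p g0) \<union> scrT0 F g0 \<and>
            scrT0 F (ideal_mult p g0) \<inter> scrT0 F g0 = {})"
proof -
  have oP: "oid p" "p \<noteq> {0}" using priD[OF P] by auto
  define g1 where "g1 = ideal_mult p g0"
  have og1: "oid g1" unfolding g1_def by (rule oid_im2[OF oP(1) G(1)])
  obtain x where x: "x \<in> p" "x \<noteq> 0" using oid_nonzero_elem[OF oP(2,1)] by blast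
  obtain y where y: "y \<in> g0" "y \<noteq> 0" using oid_nonzero_elem[OF G(2,1)] by blast
  have g1nz: "g1 \<noteq> {0}" unfolding g1_def by (rule im_nonzero[OF x y])
  have g1g0: "g1 \<subseteq> g0" unfolding g1_def by (rule im_sub_right[OF oP(1) oid_omod[OF G(1)]])
  have neq: "g1 \<noteq> g0" unfolding g1_def by (rule pri_mult_neq[OF P G])
  have T': "Ob \<in> scrT' F p g0 \<longleftrightarrow>
    (\<exists>z. z \<in> all_chars F \<and> g1 \<subseteq> cond z \<and> colon (cond z) p = g0 \<and> Ob = orbit F z)" for Ob
    unfolding g1_def by (rule mem_scrT'[OF oP G])
  have T1: "Ob \<in> scrT0 F g1 \<longleftrightarrow> (\<exists>z. z \<in> all_chars F \<and> cond z = g1 \<and> Ob = orbit F z)" for Ob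
    by (rule mem_scrT0[OF og1 g1nz])
  have T0: "Ob \<in> scrT0 F g0 \<longleftrightarrow> (\<exists>z. z \<in> all_chars F \<and> cond z = g0 \<and> Ob = orbit F z)" for Ob
    by (rule mem_scrT0[OF G])
  have hcases: "cond z = g1 \<or> (cond z = g0 \<and> \<not> ideal_dvd F p g0)"
    if "z \<in> all_chars F" "g1 \<subseteq> cond z" "colon (cond z) p = g0" for z
    using colon_eq_cases[OF P G oid_cond'[OF that(1)]] that(2,3) unfolding g1_def by blast
  have from1: "g1 \<subseteq> cond z \<and> colon (cond z) p = g0" if "cond z = g1" for z
    using that colon_prod[OF P G] unfolding g1_def by simp
  have from0: "g1 \<subseteq> cond z \<and> colon (cond z) p = g0" if "cond z = g0" "\<not> ideal_dvd F p g0" for z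
    using that colon_notdvd[OF P G] g1g0 by simp
  have part1: "scrT' F p g0 = scrT0 F g1" if hd: "ideal_dvd F p g0"
  proof (intro Set.set_eqI)
    fix Ob
    show "Ob \<in> scrT' F p g0 \<longleftrightarrow> Ob \<in> scrT0 F g1"
      unfolding T' T1 using hcases from1 hd by blast
  qed
  have part2: "scrT' F p g0 = scrT0 F g1 \<union> scrT0 F g0" if nd: "\<not> ideal_dvd F p g0"
  proof (intro Set.set_eqI)
    fix Ob
    show "Ob \<in> scrT' F p g0 \<longleftrightarrow> Ob \<in> scrT0 F g1 \<union> scrT0 F g0"
      unfolding Un_iff T' T1 T0 using hcases from1 from0[OF _ nd] by blast
  qed
  have disj: "scrT0 F g1 \<inter> scrT0 F g0 = {}"
  proof (rule ccontr)
    assume "scrT0 F g1 \<inter> scrT0 F g0 \<noteq> {}"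
    then obtain Ob where "Ob \<in> scrT0 F g1" "Ob \<in> scrT0 F g0" by blast
    then obtain z1 z2 where z1: "z1 \<in> all_chars F" "cond z1 = g1" "Ob = orbit F z1"
      and z2: "z2 \<in> all_chars F" "cond z2 = g0" "Ob = orbit F z2"
      unfolding T1 T0 by blast
    have "orbit_rel F z1 z2" using orbit_eq_iff[OF z1(1) z2(1)] z1(3) z2(3) by simp
    then have "cond z2 = cond z1" by (rule cond_orbit)
    then show False using z1(2) z2(2) neq by simp
  qed
  show ?thesis using part1 part2 disj unfolding g1_def by blast
qed

end

theorem lemma6p27:
  fixes F p g0 g1 :: "complex set"
  assumes "totally_real_field F"
    and "integral_ideal F g0"
    and "prime_ideal F p"
    and "g1 = ideal_mult p g0"
  shows "(ideal_dvd F p g0 \<longrightarrow> scrT' F p g0 = scrT0 F g1)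
       \<and> (\<not> ideal_dvd F p g0 \<longrightarrow>
            scrT' F p g0 = scrT0 F g1 \<union> scrT0 F g0 \<and> scrT0 F g1 \<inter> scrT0 F g0 = {})"
proof -
  interpret nf F using assms(1) unfolding totally_real_field_def by unfold_locales blast
  have P: "pri p" using assms(3) prime_ideal_iff by blast
  have G: "oid g0" "g0 \<noteq> {0}" using assms(2) integral_ideal_iff by blast+
  show ?thesis using main[OF P G] assms(4) by simp
qed

end
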